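(* Use the parameter choice below with $t_0^\theta\ge a(\kappa^2+b)$, and define the deterministic sequence $g_0:=-f_\rho$, $g_t:=\big[I-\gamma_t(L_K+\lambda_tI)\big]g_{t-1}-\gamma_t\lambda_tf_\rho$ for $t\ge1$. Then for all $t\ge0$: (A) $\|g_t\|_\rho\le M_\rho$; (B) $g_t+f_\rho\in\mathscr H_K$ and $\|g_t+f_\rho\|_K\le3M_\rho/\sqrt{\lambda_t}$.
   Context: Setting. $\mathscr X\subseteq\mathbb R^n$ is closed, $\mathscr Y=\mathbb R$, $\mathscr Z=\mathscr X\times\mathscr Y$, and $\rho$ is a Borel probability measure on $\mathscr Z$ with marginal $\rho_{\mathscr X}$ on $\mathscr X$ and conditional distributions $\rho_{\mathscr Y|x}$; the regression function is $f_\rho(x)=\int_{\mathscr Y}y\,d\rho_{\mathscr Y|x}(y)$. It is assumed that $\operatorname{supp}\rho\subseteq\mathscr X\times[-M_\rho,M_\rho]$ for a constant $M_\rho\ge0$. $K:\mathscr X\times\mathscr X\to\mathbb R$ is a Mercer kernel (continuous, symmetric, positive semidefinite) with $\kappa:=\sup_{x\in\mathscr X}\sqrt{K(x,x)}<\infty$; $K_x:=K(x,\cdot)$; $\mathscr H_K$ is the associated reproducing kernel Hilbert space with norm $\|\cdot\|_K$. $\|\cdot\|_\rho$ is the norm of $L^2_{\rho_{\mathscr X}}$. $L_Kf(x)=\int_{\mathscr X}K(x,u)f(u)\,d\rho_{\mathscr X}(u)$; as an operator on $L^2_{\rho_{\mathscr X}}$ it is compact, positive and self-adjoint, and all its eigenvalues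 are assumed positive. Parameter choice. For $\theta\in[0,1]$, $t_0>0$, $a\in(0,t_0^\theta)$, $b\in(0,t_0^{1-\theta})$ put $\bar t:=t+t_0$, $\gamma_t=a\bar t^{-\theta}$ and $\lambda_t=b\bar t^{-(1-\theta)}$ for $t\ge0$. *)

theory Defs
  imports "HOL-Probability.Probability"
begin

text \<open>A finite combination sum_i c_i K_{x_i} is represented by a list of pairs (c_i, x_i).\<close>

definition kcomb_fun :: "('a \<Rightarrow> 'a \<Rightarrow> real) \<Rightarrow> (real \<times> 'a) list \<Rightarrow> 'a \<Rightarrow> real" where
  "kcomb_fun K cs = (\<lambda>x. (\<Sum>(c,u)\<leftarrow>cs. c * K u x))"

definition kcomb_sq :: "('a \<Rightarrow> 'a \<Rightarrow> real) \<Rightarrow> (real \<times> 'a) list \<Rightarrow> real" where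
  "kcomb_sq K cs = (\<Sum>(c,u)\<leftarrow>cs. \<Sum>(d,v)\<leftarrow>cs. c * d * K u v)"

definition kcomb_neg :: "(real \<times> 'a) list \<Rightarrow> (real \<times> 'a) list" where
  "kcomb_neg cs = map (\<lambda>(c,u). (- c, u)) cs"

definition rkhs_approx :: "('a \<Rightarrow> 'a \<Rightarrow> real) \<Rightarrow> 'a set \<Rightarrow> ('a \<Rightarrow> real) \<Rightarrow> (nat \<Rightarrow> (real \<times> 'a) list) \<Rightarrow> bool" where
  "rkhs_approx K X f S \<longleftrightarrow>
     (\<forall>n. snd ` set (S n) \<subseteq> X) \<and>
     (\<forall>e>0. \<exists>N. \<forall>m\<ge>N. \<forall>n\<ge>N. kcomb_sq K (S m @ kcomb_neg (S n)) < e) \<and>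
     (\<forall>x\<in>X. (\<lambda>n. kcomb_fun K (S n) x) \<longlonglongrightarrow> f x)"

definition in_rkhs :: "('a \<Rightarrow> 'a \<Rightarrow> real) \<Rightarrow> 'a set \<Rightarrow> ('a \<Rightarrow> real) \<Rightarrow> bool" where
  "in_rkhs K X f \<longleftrightarrow> (\<exists>S. rkhs_approx K X f S)"

definition rkhs_norm :: "('a \<Rightarrow> 'a \<Rightarrow> real) \<Rightarrow> 'a set \<Rightarrow> ('a \<Rightarrow> real) \<Rightarrow> real" where
  "rkhs_norm K X f = (THE L. \<exists>S. rkhs_approx K X f S \<and> (\<lambda>n. sqrt (kcomb_sq K (S n))) \<longlonglongrightarrow> L)"

definition mercer_kernel :: "('a::topological_space \<Rightarrow> 'a \<Rightarrow> real) \<Rightarrow> 'a set \<Rightarrow> bool" where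
  "mercer_kernel K X \<longleftrightarrow>
     continuous_on (X \<times> X) (\<lambda>(x,y). K x y) \<and>
     (\<forall>x\<in>X. \<forall>y\<in>X. K x y = K y x) \<and>
     (\<forall>cs. snd ` set cs \<subseteq> X \<longrightarrow> 0 \<le> kcomb_sq K cs)"

definition kappa :: "('a \<Rightarrow> 'a \<Rightarrow> real) \<Rightarrow> 'a set \<Rightarrow> real" where
  "kappa K X = (SUP x\<in>X. sqrt (K x x))"

definition marginal :: "('a::euclidean_space \<times> real) measure \<Rightarrow> 'a set \<Rightarrow> 'a measure" where
  "marginal rho X = restrict_space (distr rho borel fst) X"

definition regr :: "('a \<Rightarrow> real measure) \<Rightarrow> 'a \<Rightarrow> real" where
  "regr condY x = (\<integral>y. y \<partial>condY x)"

definition LK :: "('a \<Rightarrow> 'a \<Rightarrow> real) \<Rightarrow> 'a measure \<Rightarrow> ('a \<Rightarrow> real) \<Rightarrow> 'a \<Rightarrow> real" where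
  "LK K rhoX f = (\<lambda>x. \<integral>u. K x u * f u \<partial>rhoX)"

definition L2norm :: "'a measure \<Rightarrow> ('a \<Rightarrow> real) \<Rightarrow> real" where
  "L2norm rhoX g = sqrt (\<integral>x. (g x)\<^sup>2 \<partial>rhoX)"

definition gam :: "real \<Rightarrow> real \<Rightarrow> real \<Rightarrow> nat \<Rightarrow> real" where
  "gam a \<theta> t0 t = a * (real t + t0) powr (- \<theta>)"

definition lam :: "real \<Rightarrow> real \<Rightarrow> real \<Rightarrow> nat \<Rightarrow> real" where
  "lam b \<theta> t0 t = b * (real t + t0) powr (- (1 - \<theta>))"

primrec gseq :: "('a \<Rightarrow> 'a \<Rightarrow> real) \<Rightarrow> 'a measure \<Rightarrow> ('a \<Rightarrow> real) \<Rightarrow> (nat \<Rightarrow> real) \<Rightarrow> (nat \<Rightarrow> real)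
                  \<Rightarrow> nat \<Rightarrow> 'a \<Rightarrow> real" where
  "gseq K rhoX f gm lm 0 = (\<lambda>x. - f x)"
| "gseq K rhoX f gm lm (Suc t) =
     (\<lambda>x. gseq K rhoX f gm lm t x
          - gm (Suc t) * (LK K rhoX (gseq K rhoX f gm lm t) x + lm (Suc t) * gseq K rhoX f gm lm t x)
          - gm (Suc t) * lm (Suc t) * f x)"

end

theory Submission
  imports Defs
begin


definition kb :: "('a \<Rightarrow> 'a \<Rightarrow> real) \<Rightarrow> (real \<times> 'a) list \<Rightarrow> (real \<times> 'a) list \<Rightarrow> real" where
  "kb K A C = (\<Sum>(c,u)\<leftarrow>A. \<Sum>(d,w)\<leftarrow>C. c * d * K u w)"

definition ksc :: "real \<Rightarrow> (real \<times> 'a) list \<Rightarrow> (real \<times> 'a) list" where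
  "ksc t A = map (\<lambda>(c,u). (t*c,u)) A"

lemma kcomb_sq_kb: "kcomb_sq K A = kb K A A"
  by (simp add: kcomb_sq_def kb_def)

lemma kb_append_l: "kb K (A @ B) C = kb K A C + kb K B C"
  by (simp add: kb_def)

lemma sum_list_map_add: "(\<Sum>x\<leftarrow>xs. (f x + g x :: real)) = (\<Sum>x\<leftarrow>xs. f x) + (\<Sum>x\<leftarrow>xs. g x)"
  by (induction xs) auto

lemma sum_list_map_mult: "(\<Sum>x\<leftarrow>xs. (c * f x :: real)) = c * (\<Sum>x\<leftarrow>xs. f x)"
  by (induction xs) (auto simp: algebra_simps)

lemma kb_append_r: "kb K A (B @ C) = kb K A B + kb K A C"
  by (simp add: kb_def case_prod_unfold sum_list_map_add)

lemma kb_neg_l: "kb K (kcomb_neg A) C = - kb K A C"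
  by (induction A) (auto simp: kb_def kcomb_neg_def case_prod_unfold sum_list_map_mult[of "-1", simplified])

lemma kb_neg_r: "kb K A (kcomb_neg C) = - kb K A C"
proof -
  have "\<And>c u. (\<Sum>x\<leftarrow>kcomb_neg C. c * fst x * K u (snd x)) = - (\<Sum>x\<leftarrow>C. c * fst x * K u (snd x))"
    by (induction C) (auto simp: kcomb_neg_def)
  then show ?thesis
    by (induction A) (auto simp: kb_def case_prod_unfold)
qed

lemma kb_sc_l: "kb K (ksc t A) C = t * kb K A C"
  by (induction A) (auto simp: kb_def ksc_def case_prod_unfold sum_list_map_mult algebra_simps)

lemma kb_sc_r: "kb K A (ksc t C) = t * kb K A C"
proof -
  have "\<And>c u. (\<Sum>x\<leftarrow>ksc t C. c * fst x * K u (snd x)) = t * (\<Sum>x\<leftarrow>C. c * fst x * K u (snd x))"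
    by (induction C) (auto simp: ksc_def algebra_simps)
  then show ?thesis
    by (induction A) (auto simp: kb_def case_prod_unfold algebra_simps)
qed

lemma kb_swap: "kb K A C = (\<Sum>(d,w)\<leftarrow>C. \<Sum>(c,u)\<leftarrow>A. c * d * K u w)"
proof (induction A)
  case Nil then show ?case by (simp add: kb_def case_prod_unfold)
next
  case (Cons a A)
  then show ?case by (simp add: kb_def case_prod_unfold sum_list_map_add)
qed

lemma kcomb_fun_append: "kcomb_fun K (A @ B) x = kcomb_fun K A x + kcomb_fun K B x"
  by (simp add: kcomb_fun_def)

lemma kcomb_fun_neg: "kcomb_fun K (kcomb_neg A) x = - kcomb_fun K A x"
  by (induction A) (auto simp: kcomb_fun_def kcomb_neg_def)

lemma kb_fun: "kb K A C = (\<Sum>(d,w)\<leftarrow>C. d * kcomb_fun K A w)"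
  unfolding kb_swap kcomb_fun_def
  by (simp add: case_prod_unfold sum_list_map_mult[symmetric] algebra_simps)

lemma kb_single: "kb K A [(1,y)] = kcomb_fun K A y"
  by (simp add: kb_fun)

lemma kb_single2: "kb K [(1,y)] [(1,y)] = K y y"
  by (simp add: kb_def)

lemma set_ksc: "snd ` set (ksc t A) = snd ` set A"
  by (force simp: ksc_def case_prod_unfold image_iff)

lemma set_kneg: "snd ` set (kcomb_neg A) = snd ` set A"
  by (force simp: kcomb_neg_def case_prod_unfold image_iff)

lemma tendsto_sum_list:
  fixes f :: "nat \<Rightarrow> 'b \<Rightarrow> real"
  assumes "\<And>x. x \<in> set xs \<Longrightarrow> (\<lambda>n. f n x) \<longlonglongrightarrow> l x"
  shows "(\<lambda>n. \<Sum>x\<leftarrow>xs. f n x) \<longlonglongrightarrow> (\<Sum>x\<leftarrow>xs. l x)"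
  using assms by (induction xs) (auto intro!: tendsto_add)

lemma discr_le:
  fixes a b c :: real
  assumes "\<And>t. 0 \<le> a + 2 * t * b + t\<^sup>2 * c"
  shows "b\<^sup>2 \<le> a * c"
proof (cases "c = 0")
  case True
  have "b = 0"
  proof (rule ccontr)
    assume "b \<noteq> 0"
    have "0 \<le> a + 2 * (- (a + 1) / (2*b)) * b" using assms[of "- (a + 1) / (2*b)"] True by simp
    also have "\<dots> = -1" using \<open>b \<noteq> 0\<close> by (simp add: field_simps)
    finally show False by simp
  qed
  then show ?thesis using assms[of 0] True by simp
next
  case False
  have c0: "0 \<le> c"
  proof (rule ccontr)
    assume "\<not> 0 \<le> c"
    then have c: "c < 0" by simp
    define t where "t = (\<bar>a\<bar> + 2*\<bar>b\<bar> + 1) / (- c) + 1"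
    have "(\<bar>a\<bar> + 2*\<bar>b\<bar> + 1) / (- c) \<ge> 0" using c by (intro divide_nonneg_pos) auto
    then have t1: "t \<ge> 1" by (simp add: t_def)
    have "t * (- c) \<ge> \<bar>a\<bar> + 2*\<bar>b\<bar> + 1" using c by (simp add: t_def field_simps)
    then have "t\<^sup>2 * (- c) \<ge> \<bar>a\<bar> + 2*\<bar>b\<bar>*t + 1"
    proof -
      have "t\<^sup>2 * (- c) = t * (t * (- c))" by (simp add: power2_eq_square)
      also have "\<dots> \<ge> t * (\<bar>a\<bar> + 2*\<bar>b\<bar> + 1)"
        using \<open>t * (- c) \<ge> _\<close> t1 by (intro mult_left_mono) auto
      finally have "t\<^sup>2 * (- c) \<ge> t * \<bar>a\<bar> + 2*\<bar>b\<bar>*t + t" by (simp add: algebra_simps)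
      moreover have "t * \<bar>a\<bar> \<ge> \<bar>a\<bar>" using mult_right_mono[of 1 t "\<bar>a\<bar>"] t1 by simp
      ultimately show ?thesis using t1 by linarith
    qed
    moreover have "2 * t * b \<le> 2 * \<bar>b\<bar> * t" using t1 by (simp add: mult_right_mono)
    ultimately have "a + 2 * t * b + t\<^sup>2 * c < 0" by linarith
    then show False using assms[of t] by simp
  qed
  then have cp: "c > 0" using False by simp
  have "0 \<le> a + 2 * (- b / c) * b + (- b / c)\<^sup>2 * c" using assms by blast
  also have "\<dots> = a - b\<^sup>2 / c" using cp by (simp add: field_simps power2_eq_square)
  finally show ?thesis using cp by (simp add: field_simps)
qed

locale kern =
  fixes K :: "'a \<Rightarrow> 'a \<Rightarrow> real" and X :: "'a set"
  assumes symK: "\<And>x y. x \<in> X \<Longrightarrow> y \<in> X \<Longrightarrow> K x y = K y x"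
    and psd: "\<And>cs. snd ` set cs \<subseteq> X \<Longrightarrow> 0 \<le> kcomb_sq K cs"
begin

lemma kb_sym:
  assumes "snd ` set A \<subseteq> X" "snd ` set C \<subseteq> X"
  shows "kb K A C = kb K C A"
proof -
  have "(\<Sum>(d,w)\<leftarrow>C. \<Sum>(c,u)\<leftarrow>A. c * d * K u w) = (\<Sum>(d,w)\<leftarrow>C. \<Sum>(c,u)\<leftarrow>A. d * c * K w u)"
  proof (rule arg_cong[where f=sum_list], rule map_cong[OF refl], clarsimp)
    fix d w assume dw: "(d, w) \<in> set C"
    have "\<And>c u. (c, u) \<in> set A \<Longrightarrow> c * d * K u w = d * c * K w u"
      using assms dw by (force intro: symK simp: image_iff)
    then show "(\<Sum>(c,u)\<leftarrow>A. c * d * K u w) = (\<Sum>(c,u)\<leftarrow>A. d * c * K w u)"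
      by (intro arg_cong[where f=sum_list] map_cong) auto
  qed
  moreover have "(\<Sum>(d,w)\<leftarrow>C. \<Sum>(c,u)\<leftarrow>A. d * c * K w u) = kb K C A" by (simp add: kb_def)
  ultimately show ?thesis using kb_swap[of K A C] by (metis (no_types))
qed

lemma kb_psd: "snd ` set A \<subseteq> X \<Longrightarrow> 0 \<le> kb K A A"
  using psd by (simp add: kcomb_sq_kb)

lemma kb_CS:
  assumes "snd ` set A \<subseteq> X" "snd ` set C \<subseteq> X"
  shows "\<bar>kb K A C\<bar> \<le> sqrt (kb K A A) * sqrt (kb K C C)"
proof -
  have "(kb K A C)\<^sup>2 \<le> kb K A A * kb K C C"
  proof (rule discr_le)
    fix t
    have "snd ` set (A @ ksc t C) \<subseteq> X" using assms by (metis Un_subset_iff image_Un set_append set_ksc)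
    then have "0 \<le> kb K (A @ ksc t C) (A @ ksc t C)"
      by (intro kb_psd)
    also have "\<dots> = kb K A A + t * kb K A C + t * kb K C A + t * (t * kb K C C)"
      by (simp add: kb_append_l kb_append_r kb_sc_l kb_sc_r algebra_simps)
    also have "\<dots> = kb K A A + 2 * t * kb K A C + t\<^sup>2 * kb K C C"
      unfolding kb_sym[OF assms(2,1)] by (simp add: power2_eq_square)
    finally show "0 \<le> kb K A A + 2 * t * kb K A C + t\<^sup>2 * kb K C C" .
  qed
  then have "sqrt ((kb K A C)\<^sup>2) \<le> sqrt (kb K A A * kb K C C)" by (rule real_sqrt_le_mono)
  then show ?thesis by (simp add: real_sqrt_mult)
qed

lemma kfun_sq_le:
  assumes "snd ` set A \<subseteq> X" "y \<in> X"
  shows "(kcomb_fun K A y)\<^sup>2 \<le> K y y * kcomb_sq K A"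
proof -
  have "\<bar>kb K A [(1,y)]\<bar> \<le> sqrt (kb K A A) * sqrt (kb K [(1,y)] [(1,y)])"
    using assms by (intro kb_CS) auto
  then have "(kb K A [(1,y)])\<^sup>2 \<le> (sqrt (kb K A A) * sqrt (kb K [(1,y)] [(1,y)]))\<^sup>2"
    by (metis abs_ge_zero power2_abs power_mono)
  also have "\<dots> = kb K A A * K y y"
    using kb_psd[OF assms(1)] kb_psd[of "[(1,y)]"] assms
    by (simp add: power_mult_distrib kb_single2)
  finally show ?thesis by (simp add: kb_single kcomb_sq_kb mult.commute)
qed

end



context kern begin

lemma rkhs_unique:
  assumes S: "rkhs_approx K X F S" and S': "rkhs_approx K X F S'"
    and L: "(\<lambda>n. sqrt (kcomb_sq K (S n))) \<longlonglongrightarrow> L"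
    and L': "(\<lambda>n. sqrt (kcomb_sq K (S' n))) \<longlonglongrightarrow> L'"
  shows "L = L'"
proof -
  define a where "a n = sqrt (kb K (S n) (S n))" for n
  define a' where "a' n = sqrt (kb K (S' n) (S' n))" for n
  define D where "D n = S n @ kcomb_neg (S' n)" for n
  have cS: "snd ` set (S n) \<subseteq> X" for n using S by (simp add: rkhs_approx_def)
  have cS': "snd ` set (S' n) \<subseteq> X" for n using S' by (simp add: rkhs_approx_def)
  have cD: "snd ` set (D n) \<subseteq> X" for n using cS cS' by (simp add: D_def image_Un set_kneg)
  have cN: "snd ` set (A @ kcomb_neg B) \<subseteq> X" if "snd ` set A \<subseteq> X" "snd ` set B \<subseteq> X" for A B
    using that by (simp add: image_Un set_kneg)
  have aL: "a \<longlonglongrightarrow> L" using L by (simp add: a_def[abs_def] kcomb_sq_kb)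
  have aL': "a' \<longlonglongrightarrow> L'" using L' by (simp add: a'_def[abs_def] kcomb_sq_kb)
  obtain Ca where Ca: "\<And>n. norm (a n) \<le> Ca" using convergent_imp_Bseq[of a] aL
    by (auto simp: convergent_def Bseq_def)
  obtain Cb where Cb: "\<And>n. norm (a' n) \<le> Cb" using convergent_imp_Bseq[of a'] aL'
    by (auto simp: convergent_def Bseq_def)
  define C where "C = Ca + Cb"
  have a0: "0 \<le> a n" "0 \<le> a' n" for n using kb_psd[OF cS] kb_psd[OF cS'] by (auto simp: a_def a'_def)
  have C0: "0 \<le> C" using Ca[of 0] Cb[of 0] a0[of 0] by (simp add: C_def)
  have Dbd: "sqrt (kb K (D n) (D n)) \<le> C" for n
  proof -
    have "kb K (D n) (D n) = kb K (S n) (S n) - kb K (S n) (S' n) - kb K (S' n) (S n) + kb K (S' n) (S' n)"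
      by (simp add: D_def kb_append_l kb_append_r kb_neg_l kb_neg_r)
    also have "\<dots> \<le> (a n)\<^sup>2 + 2 * (a n * a' n) + (a' n)\<^sup>2"
    proof -
      have p1: "(a n)\<^sup>2 = kb K (S n) (S n)" using kb_psd[OF cS, of n] by (simp add: a_def)
      have p2: "(a' n)\<^sup>2 = kb K (S' n) (S' n)" using kb_psd[OF cS', of n] by (simp add: a'_def)
      have p3: "- kb K (S n) (S' n) \<le> a n * a' n"
        using kb_CS[OF cS cS', of n n] abs_ge_minus_self[of "kb K (S n) (S' n)"]
        unfolding a_def a'_def by linarith
      have p4: "- kb K (S' n) (S n) \<le> a n * a' n"
        using kb_CS[OF cS' cS, of n n] abs_ge_minus_self[of "kb K (S' n) (S n)"]
        unfolding a_def a'_def by (simp add: mult.commute)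
      show ?thesis using p1 p2 p3 p4 by linarith
    qed
    also have "\<dots> = (a n + a' n)\<^sup>2" by (simp add: power2_eq_square algebra_simps)
    finally have "sqrt (kb K (D n) (D n)) \<le> sqrt ((a n + a' n)\<^sup>2)" by (rule real_sqrt_le_mono)
    then have "sqrt (kb K (D n) (D n)) \<le> a n + a' n" using a0[of n] by simp
    also have "\<dots> \<le> C" using Ca[of n] Cb[of n] a0 by (simp add: C_def)
    finally show ?thesis .
  qed
  have key: "\<bar>L\<^sup>2 - L'\<^sup>2\<bar> \<le> 2 * C * e" if e: "e > 0" for e
  proof -
    have e2: "e\<^sup>2 > 0" using e by simp
    obtain N1 where N1: "\<And>m n. m \<ge> N1 \<Longrightarrow> n \<ge> N1 \<Longrightarrow> kcomb_sq K (S m @ kcomb_neg (S n)) < e\<^sup>2"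
    proof -
      have "\<forall>e>0. \<exists>N. \<forall>m\<ge>N. \<forall>n\<ge>N. kcomb_sq K (S m @ kcomb_neg (S n)) < e"
        using S unfolding rkhs_approx_def by (elim conjE)
      from this[rule_format, OF e2] obtain N where "\<forall>m\<ge>N. \<forall>n\<ge>N. kcomb_sq K (S m @ kcomb_neg (S n)) < e\<^sup>2"
        by blast
      then show ?thesis using that by blast
    qed
    obtain N2 where N2: "\<And>m n. m \<ge> N2 \<Longrightarrow> n \<ge> N2 \<Longrightarrow> kcomb_sq K (S' m @ kcomb_neg (S' n)) < e\<^sup>2"
    proof -
      have "\<forall>e>0. \<exists>N. \<forall>m\<ge>N. \<forall>n\<ge>N. kcomb_sq K (S' m @ kcomb_neg (S' n)) < e"
        using S' unfolding rkhs_approx_def by (elim conjE)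
      from this[rule_format, OF e2] obtain N where "\<forall>m\<ge>N. \<forall>n\<ge>N. kcomb_sq K (S' m @ kcomb_neg (S' n)) < e\<^sup>2"
        by blast
      then show ?thesis using that by blast
    qed
    define N where "N = max N1 N2"
    define r where "r n = \<bar>kb K (D n) (S N)\<bar> + \<bar>kb K (D n) (S' N)\<bar>" for n
    have r0: "r \<longlonglongrightarrow> 0"
    proof -
      have fD: "(\<lambda>n. kcomb_fun K (D n) w) \<longlonglongrightarrow> 0" if "w \<in> X" for w
      proof -
        have "(\<lambda>n. kcomb_fun K (S n) w - kcomb_fun K (S' n) w) \<longlonglongrightarrow> F w - F w"
          using S S' that unfolding rkhs_approx_def by (intro tendsto_diff) auto
        then show ?thesis by (simp add: D_def kcomb_fun_append kcomb_fun_neg)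
      qed
      have lim: "(\<lambda>n. kb K (D n) B) \<longlonglongrightarrow> 0" if "snd ` set B \<subseteq> X" for B
      proof -
        have "(\<lambda>n. \<Sum>x\<leftarrow>B. fst x * kcomb_fun K (D n) (snd x)) \<longlonglongrightarrow> (\<Sum>x\<leftarrow>B. fst x * 0)"
          using that fD by (intro tendsto_sum_list tendsto_mult tendsto_const) auto
        then show ?thesis by (simp add: kb_fun case_prod_unfold)
      qed
      have "r \<longlonglongrightarrow> \<bar>0\<bar> + \<bar>0\<bar>"
        unfolding r_def by (rule tendsto_add[OF tendsto_rabs[OF lim[OF cS]] tendsto_rabs[OF lim[OF cS']]])
      then show ?thesis by simp
    qed
    have bnd: "\<bar>(a n)\<^sup>2 - (a' n)\<^sup>2\<bar> \<le> 2 * C * e + r n" if n: "n \<ge> N" for n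
    proof -
      have sqD: "sqrt (kb K (S m @ kcomb_neg (S k)) (S m @ kcomb_neg (S k))) \<le> e"
        if "m \<ge> N" "k \<ge> N" for m k
      proof -
        have "kb K (S m @ kcomb_neg (S k)) (S m @ kcomb_neg (S k)) \<le> e\<^sup>2"
          using N1[of m k] that by (simp add: N_def kcomb_sq_kb)
        then have "sqrt (kb K (S m @ kcomb_neg (S k)) (S m @ kcomb_neg (S k))) \<le> sqrt (e\<^sup>2)"
          by (rule real_sqrt_le_mono)
        then show ?thesis using e by simp
      qed
      have sqD': "sqrt (kb K (S' m @ kcomb_neg (S' k)) (S' m @ kcomb_neg (S' k))) \<le> e"
        if "m \<ge> N" "k \<ge> N" for m k
      proof -
        have "kb K (S' m @ kcomb_neg (S' k)) (S' m @ kcomb_neg (S' k)) \<le> e\<^sup>2"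
          using N2[of m k] that by (simp add: N_def kcomb_sq_kb)
        then have "sqrt (kb K (S' m @ kcomb_neg (S' k)) (S' m @ kcomb_neg (S' k))) \<le> sqrt (e\<^sup>2)"
          by (rule real_sqrt_le_mono)
        then show ?thesis using e by simp
      qed
      have e1: "(a n)\<^sup>2 - (a' n)\<^sup>2 = kb K (D n) (S n) + kb K (D n) (S' n)"
        using kb_psd[OF cS, of n] kb_psd[OF cS', of n] kb_sym[OF cS cS', of n n]
        by (simp add: a_def a'_def D_def kb_append_l kb_neg_l)
      have e2: "kb K (D n) (S n) = kb K (D n) (S n @ kcomb_neg (S N)) + kb K (D n) (S N)"
        by (simp add: kb_append_r kb_neg_r)
      have e3: "kb K (D n) (S' n) = kb K (D n) (S' n @ kcomb_neg (S' N)) + kb K (D n) (S' N)"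
        by (simp add: kb_append_r kb_neg_r)
      have b1: "\<bar>kb K (D n) (S n @ kcomb_neg (S N))\<bar> \<le> C * e"
      proof -
        have "\<bar>kb K (D n) (S n @ kcomb_neg (S N))\<bar> \<le> sqrt (kb K (D n) (D n)) *
              sqrt (kb K (S n @ kcomb_neg (S N)) (S n @ kcomb_neg (S N)))"
          by (rule kb_CS[OF cD cN[OF cS cS]])
        also have "\<dots> \<le> C * e" using Dbd[of n] sqD[of n N] n C0 kb_psd[OF cN[OF cS cS], of n N]
          by (intro mult_mono) auto
        finally show ?thesis .
      qed
      have b2: "\<bar>kb K (D n) (S' n @ kcomb_neg (S' N))\<bar> \<le> C * e"
      proof -
        have "\<bar>kb K (D n) (S' n @ kcomb_neg (S' N))\<bar> \<le> sqrt (kb K (D n) (D n)) *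
              sqrt (kb K (S' n @ kcomb_neg (S' N)) (S' n @ kcomb_neg (S' N)))"
          by (rule kb_CS[OF cD cN[OF cS' cS']])
        also have "\<dots> \<le> C * e" using Dbd[of n] sqD'[of n N] n C0 kb_psd[OF cN[OF cS' cS'], of n N]
          by (intro mult_mono) auto
        finally show ?thesis .
      qed
      show ?thesis using e1 e2 e3 b1 b2 unfolding r_def by linarith
    qed
    have l1: "(\<lambda>n. \<bar>(a n)\<^sup>2 - (a' n)\<^sup>2\<bar>) \<longlonglongrightarrow> \<bar>L\<^sup>2 - L'\<^sup>2\<bar>"
      by (rule tendsto_rabs[OF tendsto_diff[OF tendsto_power[OF aL] tendsto_power[OF aL']]])
    have l2: "(\<lambda>n. 2 * C * e + r n) \<longlonglongrightarrow> 2 * C * e + 0"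
      by (rule tendsto_add[OF tendsto_const r0])
    have "\<exists>N. \<forall>n\<ge>N. \<bar>(a n)\<^sup>2 - (a' n)\<^sup>2\<bar> \<le> 2 * C * e + r n" using bnd by blast
    from LIMSEQ_le[OF l1 l2 this] show ?thesis by simp
  qed
  have "\<bar>L\<^sup>2 - L'\<^sup>2\<bar> \<le> 0"
  proof (rule field_le_epsilon)
    fix e :: real assume e: "0 < e"
    show "\<bar>L\<^sup>2 - L'\<^sup>2\<bar> \<le> 0 + e"
    proof (cases "C = 0")
      case True then show ?thesis using key[of 1] e by simp
    next
      case False
      then have "2 * C * (e / (2 * C)) = e" by simp
      then show ?thesis using key[of "e / (2*C)"] e C0 False by simp
    qed
  qed
  moreover have "L \<ge> 0" using a0 by (intro LIMSEQ_le_const[OF aL]) auto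
  moreover have "L' \<ge> 0" using a0 by (intro LIMSEQ_le_const[OF aL']) auto
  ultimately show ?thesis by (simp add: power2_eq_iff_nonneg)
qed

lemma rkhs_norm_eq:
  assumes S: "rkhs_approx K X F S" and L: "(\<lambda>n. sqrt (kcomb_sq K (S n))) \<longlonglongrightarrow> L"
  shows "rkhs_norm K X F = L"
  unfolding rkhs_norm_def
proof (rule the_equality)
  show "\<exists>S. rkhs_approx K X F S \<and> (\<lambda>n. sqrt (kcomb_sq K (S n))) \<longlonglongrightarrow> L" using S L by blast
next
  fix L' assume "\<exists>S. rkhs_approx K X F S \<and> (\<lambda>n. sqrt (kcomb_sq K (S n))) \<longlonglongrightarrow> L'"
  then obtain S' where "rkhs_approx K X F S'" "(\<lambda>n. sqrt (kcomb_sq K (S' n))) \<longlonglongrightarrow> L'" by blast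
  then show "L' = L" using rkhs_unique[OF _ S _ L] by blast
qed

end

lemma rkhs_approx_cong:
  assumes "\<And>x. x \<in> X \<Longrightarrow> F x = G x"
  shows "rkhs_approx K X F S = rkhs_approx K X G S"
  unfolding rkhs_approx_def using assms by auto

lemma in_rkhs_cong:
  assumes "\<And>x. x \<in> X \<Longrightarrow> F x = G x"
  shows "in_rkhs K X F = in_rkhs K X G"
proof -
  have "rkhs_approx K X F = rkhs_approx K X G" by (rule ext, rule rkhs_approx_cong, rule assms)
  then show ?thesis unfolding in_rkhs_def by simp
qed

lemma rkhs_norm_cong:
  assumes "\<And>x. x \<in> X \<Longrightarrow> F x = G x"
  shows "rkhs_norm K X F = rkhs_norm K X G"
proof -
  have "rkhs_approx K X F = rkhs_approx K X G" by (rule ext, rule rkhs_approx_cong, rule assms)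
  then show ?thesis unfolding rkhs_norm_def by simp
qed



lemma integrable_mult_bdd:
  fixes v g :: "'a \<Rightarrow> real"
  assumes "integrable M v" "g \<in> borel_measurable M" "\<And>x. x \<in> space M \<Longrightarrow> \<bar>g x\<bar> \<le> B"
  shows "integrable M (\<lambda>x. v x * g x)"
proof -
  have i: "integrable M (\<lambda>x. B * v x)" using assms(1) by simp
  have m: "(\<lambda>x. v x * g x) \<in> borel_measurable M"
    using assms(1,2) by (intro borel_measurable_times) auto
  have a: "AE x in M. norm (v x * g x) \<le> norm (B * v x)"
  proof (rule AE_I2)
    fix x assume "x \<in> space M"
    then have "\<bar>g x\<bar> \<le> B" by (rule assms(3))
    then have "\<bar>v x\<bar> * \<bar>g x\<bar> \<le> \<bar>v x\<bar> * \<bar>B\<bar>" by (intro mult_left_mono) auto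
    then show "norm (v x * g x) \<le> norm (B * v x)" by (simp add: abs_mult mult.commute)
  qed
  from i m a show ?thesis by (rule Bochner_Integration.integrable_bound)
qed

locale kop = kern K X for K :: "'a::metric_space \<Rightarrow> 'a \<Rightarrow> real" and X +
  fixes \<mu> :: "'a measure" and k2 :: real and d :: "nat \<Rightarrow> 'a"
  assumes prob: "prob_space \<mu>" and spc: "space \<mu> = X"
    and sets_mu: "sets \<mu> = sets (restrict_space borel X)"
    and Kcont: "continuous_on (X \<times> X) (\<lambda>(x,y). K x y)"
    and Kbd: "\<And>x y. x \<in> X \<Longrightarrow> y \<in> X \<Longrightarrow> \<bar>K x y\<bar> \<le> k2"
    and dX: "\<And>k. d k \<in> X"
    and dense: "\<And>x e. x \<in> X \<Longrightarrow> e > 0 \<Longrightarrow> \<exists>k. dist x (d k) < e"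
begin

lemma k2_nonneg: "0 \<le> k2" using Kbd[OF dX dX] by (meson abs_ge_zero order_trans)

lemma meas_cont: "continuous_on X f \<Longrightarrow> f \<in> borel_measurable \<mu>"
  using borel_measurable_continuous_on_restrict[of X f] measurable_cong_sets[OF sets_mu refl] by blast

lemma Kmeas1: "y \<in> X \<Longrightarrow> (\<lambda>x. K x y) \<in> borel_measurable \<mu>"
proof (rule meas_cont)
  assume y: "y \<in> X"
  have "continuous_on X ((\<lambda>(x,y). K x y) \<circ> (\<lambda>x. (x, y)))"
    by (rule continuous_on_compose) (auto intro!: continuous_intros continuous_on_subset[OF Kcont] simp: y)
  then show "continuous_on X (\<lambda>x. K x y)" by (simp add: o_def)
qed

lemma Kmeas2: "y \<in> X \<Longrightarrow> (\<lambda>x. K y x) \<in> borel_measurable \<mu>"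
proof (rule meas_cont)
  assume y: "y \<in> X"
  have "continuous_on X ((\<lambda>(x,y). K x y) \<circ> (\<lambda>x. (y, x)))"
    by (rule continuous_on_compose) (auto intro!: continuous_intros continuous_on_subset[OF Kcont] simp: y)
  then show "continuous_on X (\<lambda>x. K y x)" by (simp add: o_def)
qed

definition idx :: "nat \<Rightarrow> 'a \<Rightarrow> nat" where
  "idx n u = (LEAST k. k \<le> n \<and> (\<forall>j\<le>n. dist u (d k) \<le> dist u (d j)))"

definition q :: "nat \<Rightarrow> 'a \<Rightarrow> 'a" where "q n u = d (idx n u)"

lemma idx_ex: "\<exists>k. k \<le> n \<and> (\<forall>j\<le>n. dist u (d k) \<le> dist u (d j))"
proof -
  have fS: "finite ((\<lambda>j. dist u (d j)) ` {..n})" "(\<lambda>j. dist u (d j)) ` {..n} \<noteq> {}" by auto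
  have "Min ((\<lambda>j. dist u (d j)) ` {..n}) \<in> (\<lambda>j. dist u (d j)) ` {..n}" using fS by (rule Min_in)
  then obtain k where k: "k \<in> {..n}" "Min ((\<lambda>j. dist u (d j)) ` {..n}) = dist u (d k)" by (rule imageE)
  have "\<forall>j\<le>n. Min ((\<lambda>j. dist u (d j)) ` {..n}) \<le> dist u (d j)" using fS(1) by auto
  then show ?thesis using k by auto
qed

lemma idx_prop: "idx n u \<le> n \<and> (\<forall>j\<le>n. dist u (d (idx n u)) \<le> dist u (d j))"
  unfolding idx_def by (rule LeastI_ex[OF idx_ex])

lemma idx_le: "idx n u \<le> n" using idx_prop by blast

lemma idx_min: "j \<le> n \<Longrightarrow> dist u (q n u) \<le> dist u (d j)"
  using idx_prop unfolding q_def by blast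

lemma q_in: "q n u \<in> X" by (simp add: q_def dX)

lemma idx_meas: "idx n \<in> \<mu> \<rightarrow>\<^sub>M count_space UNIV"
proof -
  have dm: "(\<lambda>u. dist u (d j)) \<in> borel_measurable \<mu>" for j
    by (rule meas_cont) (intro continuous_intros)
  have "(\<lambda>u. k \<le> n \<and> (\<forall>j\<le>n. dist u (d k) \<le> dist u (d j))) \<in> \<mu> \<rightarrow>\<^sub>M count_space UNIV" for k
    using dm by measurable
  then show ?thesis unfolding idx_def[abs_def] by (rule measurable_Least)
qed

lemma comp_idx_meas: "(\<lambda>u. \<phi> (idx n u)) \<in> borel_measurable \<mu>"
  by (rule measurable_compose_countable[where f="\<lambda>i x. \<phi> i", OF _ idx_meas]) simp

lemma comp_q_meas: "(\<lambda>u. \<phi> (q n u)) \<in> borel_measurable \<mu>"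
  unfolding q_def by (rule comp_idx_meas)

lemma q_tendsto:
  assumes u: "u \<in> X" and m: "filterlim m at_top sequentially"
  shows "(\<lambda>i. q (m i) u) \<longlonglongrightarrow> u"
proof (rule tendstoI)
  fix e :: real assume e: "e > 0"
  obtain k where k: "dist u (d k) < e" using dense[OF u e] by blast
  have "eventually (\<lambda>i. m i \<ge> k) sequentially" using m by (simp add: filterlim_at_top)
  then show "eventually (\<lambda>i. dist (q (m i) u) u < e) sequentially"
  proof (rule eventually_mono)
    fix i assume "m i \<ge> k"
    then have "dist u (q (m i) u) \<le> dist u (d k)" by (rule idx_min)
    then show "dist (q (m i) u) u < e" using k by (simp add: dist_commute)
  qed
qed


definition cset :: "nat \<Rightarrow> nat \<Rightarrow> 'a set" where
  "cset n k = {u \<in> space \<mu>. idx n u = k}"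

definition cf :: "('a \<Rightarrow> real) \<Rightarrow> nat \<Rightarrow> nat \<Rightarrow> real" where
  "cf v n k = (\<integral>u. v u * indicator (cset n k) u \<partial>\<mu>)"

definition Sq :: "('a \<Rightarrow> real) \<Rightarrow> nat \<Rightarrow> (real \<times> 'a) list" where
  "Sq v n = map (\<lambda>k. (cf v n k, d k)) [0..<Suc n]"

definition Lop :: "('a \<Rightarrow> real) \<Rightarrow> 'a \<Rightarrow> real" where
  "Lop v y = (\<integral>u. v u * K u y \<partial>\<mu>)"

lemma cset_sets: "cset n k \<in> sets \<mu>"
proof -
  have "idx n -` {k} \<inter> space \<mu> \<in> sets \<mu>" by (rule measurable_sets[OF idx_meas]) simp
  moreover have "idx n -` {k} \<inter> space \<mu> = cset n k" by (auto simp: cset_def)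
  ultimately show ?thesis by simp
qed

lemma Sq_centers: "snd ` set (Sq v n) \<subseteq> X"
  by (auto simp: Sq_def dX)

lemma KL:
  assumes v: "integrable \<mu> v"
  shows "(\<Sum>x\<leftarrow>Sq v n. fst x * \<phi> (snd x)) = (\<integral>u. v u * \<phi> (q n u) \<partial>\<mu>)"
proof -
  have "(\<Sum>x\<leftarrow>Sq v n. fst x * \<phi> (snd x)) = (\<Sum>k\<in>{0..<Suc n}. cf v n k * \<phi> (d k))"
    by (simp add: Sq_def interv_sum_list_conv_sum_set_nat o_def)
  also have "\<dots> = (\<Sum>k\<in>{0..<Suc n}. \<integral>u. v u * indicator (cset n k) u * \<phi> (d k) \<partial>\<mu>)"
    by (simp add: cf_def)
  also have "\<dots> = (\<integral>u. (\<Sum>k\<in>{0..<Suc n}. v u * indicator (cset n k) u * \<phi> (d k)) \<partial>\<mu>)"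
  proof (rule Bochner_Integration.integral_sum[where f="\<lambda>k u. v u * indicator (cset n k) u * \<phi> (d k)", symmetric])
    fix k
    have "integrable \<mu> (\<lambda>u. v u * indicator (cset n k) u)"
      by (rule integrable_real_mult_indicator[OF cset_sets v])
    then show "integrable \<mu> (\<lambda>u. v u * indicator (cset n k) u * \<phi> (d k))"
      by (rule integrable_mult_left)
  qed
  also have "\<dots> = (\<integral>u. v u * \<phi> (q n u) \<partial>\<mu>)"
  proof (rule Bochner_Integration.integral_cong[OF refl])
    fix u assume u: "u \<in> space \<mu>"
    have "(\<Sum>k\<in>{0..<Suc n}. v u * indicator (cset n k) u * \<phi> (d k))
        = (\<Sum>k\<in>{0..<Suc n}. if idx n u = k then v u * \<phi> (d k) else 0)"
      by (rule sum.cong[OF refl]) (simp add: cset_def u indicator_def)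
    also have "\<dots> = v u * \<phi> (q n u)"
      using idx_le[of n u] by (simp add: sum.delta q_def)
    finally show "(\<Sum>k\<in>{0..<Suc n}. v u * indicator (cset n k) u * \<phi> (d k)) = v u * \<phi> (q n u)" .
  qed
  finally show ?thesis .
qed

lemma kfun_rep:
  assumes v: "integrable \<mu> v"
  shows "kcomb_fun K (Sq v n) y = (\<integral>u. v u * K (q n u) y \<partial>\<mu>)"
  unfolding kcomb_fun_def case_prod_unfold by (rule KL[OF v])

lemma kb_rep:
  assumes v: "integrable \<mu> v"
  shows "kb K A (Sq v n) = (\<integral>u. v u * kcomb_fun K A (q n u) \<partial>\<mu>)"
  unfolding kb_fun case_prod_unfold by (rule KL[OF v])

lemma kfun_bound:
  assumes v: "integrable \<mu> v" and y: "y \<in> X"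
  shows "\<bar>kcomb_fun K (Sq v n) y\<bar> \<le> k2 * (\<integral>u. \<bar>v u\<bar> \<partial>\<mu>)"
proof -
  have "\<bar>kcomb_fun K (Sq v n) y\<bar> \<le> (\<integral>u. \<bar>v u * K (q n u) y\<bar> \<partial>\<mu>)"
    unfolding kfun_rep[OF v] by (rule integral_abs_bound)
  also have "\<dots> \<le> (\<integral>u. k2 * \<bar>v u\<bar> \<partial>\<mu>)"
  proof (rule integral_mono)
    show "integrable \<mu> (\<lambda>u. \<bar>v u * K (q n u) y\<bar>)"
      by (intro integrable_abs integrable_mult_bdd[OF v comp_q_meas, where B=k2] Kbd q_in y)
    show "integrable \<mu> (\<lambda>u. k2 * \<bar>v u\<bar>)" using v by auto
    fix u assume "u \<in> space \<mu>"
    have "\<bar>K (q n u) y\<bar> \<le> k2" by (intro Kbd q_in y)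
    then have "\<bar>v u\<bar> * \<bar>K (q n u) y\<bar> \<le> \<bar>v u\<bar> * k2" by (intro mult_left_mono) auto
    then show "\<bar>v u * K (q n u) y\<bar> \<le> k2 * \<bar>v u\<bar>" by (simp add: abs_mult mult.commute)
  qed
  finally show ?thesis by simp
qed


lemma Lim1:
  assumes v: "integrable \<mu> v" and m: "filterlim m at_top sequentially"
    and y: "\<And>i. y i \<in> X" and yl: "y \<longlonglongrightarrow> y0" and y0: "y0 \<in> X"
  shows "(\<lambda>i. kcomb_fun K (Sq v (m i)) (y i)) \<longlonglongrightarrow> Lop v y0"
proof -
  have vm: "v \<in> borel_measurable \<mu>" using v by auto
  have "(\<lambda>i. \<integral>u. v u * K (q (m i) u) (y i) \<partial>\<mu>) \<longlonglongrightarrow> (\<integral>u. v u * K u y0 \<partial>\<mu>)"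
  proof (rule integral_dominated_convergence[where w="\<lambda>u. k2 * \<bar>v u\<bar>"])
    show "(\<lambda>u. v u * K u y0) \<in> borel_measurable \<mu>"
      using vm Kmeas1[OF y0] by (rule borel_measurable_times)
    show "(\<lambda>u. v u * K (q (m i) u) (y i)) \<in> borel_measurable \<mu>" for i
      using vm comp_q_meas by (rule borel_measurable_times)
    show "integrable \<mu> (\<lambda>u. k2 * \<bar>v u\<bar>)" using v by auto
    show "AE u in \<mu>. (\<lambda>i. v u * K (q (m i) u) (y i)) \<longlonglongrightarrow> v u * K u y0"
    proof (rule AE_I2)
      fix u assume "u \<in> space \<mu>"
      then have u: "u \<in> X" using spc by simp
      have "(\<lambda>i. (q (m i) u, y i)) \<longlonglongrightarrow> (u, y0)"
        by (intro tendsto_Pair q_tendsto[OF u m] yl)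
      from continuous_on_tendsto_compose[OF Kcont this]
      have "(\<lambda>i. (\<lambda>(x,y). K x y) (q (m i) u, y i)) \<longlonglongrightarrow> (\<lambda>(x,y). K x y) (u, y0)"
        by (auto simp: u y0 q_in y)
      then have "(\<lambda>i. K (q (m i) u) (y i)) \<longlonglongrightarrow> K u y0" by simp
      then show "(\<lambda>i. v u * K (q (m i) u) (y i)) \<longlonglongrightarrow> v u * K u y0"
        by (rule tendsto_mult[OF tendsto_const])
    qed
    show "AE u in \<mu>. norm (v u * K (q (m i) u) (y i)) \<le> k2 * \<bar>v u\<bar>" for i
    proof (rule AE_I2)
      fix u assume "u \<in> space \<mu>"
      have "\<bar>K (q (m i) u) (y i)\<bar> \<le> k2" by (intro Kbd q_in y)
      then have "\<bar>v u\<bar> * \<bar>K (q (m i) u) (y i)\<bar> \<le> \<bar>v u\<bar> * k2" by (intro mult_left_mono) auto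
      then show "norm (v u * K (q (m i) u) (y i)) \<le> k2 * \<bar>v u\<bar>" by (simp add: abs_mult mult.commute)
    qed
  qed
  then show ?thesis by (simp add: kfun_rep[OF v] Lop_def)
qed

lemma kfun_meas: "(\<lambda>y. kcomb_fun K A y) \<in> borel_measurable \<mu>" if "snd ` set A \<subseteq> X"
  using that
proof (induction A)
  case Nil then show ?case by (simp add: kcomb_fun_def)
next
  case (Cons a A)
  have "snd a \<in> X" using Cons.prems by auto
  then have "(\<lambda>y. fst a * K (snd a) y) \<in> borel_measurable \<mu>"
    by (intro borel_measurable_times Kmeas2) auto
  moreover have "(\<lambda>y. kcomb_fun K A y) \<in> borel_measurable \<mu>" using Cons by auto
  ultimately have "(\<lambda>y. fst a * K (snd a) y + kcomb_fun K A y) \<in> borel_measurable \<mu>"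
    by (rule borel_measurable_add)
  then show ?case by (simp add: kcomb_fun_def case_prod_unfold)
qed

lemma Lop_meas:
  assumes v: "integrable \<mu> v"
  shows "Lop v \<in> borel_measurable \<mu>"
proof (rule borel_measurable_LIMSEQ_real)
  fix y assume "y \<in> space \<mu>"
  then have y: "y \<in> X" using spc by simp
  show "(\<lambda>i. kcomb_fun K (Sq v i) y) \<longlonglongrightarrow> Lop v y"
    using Lim1[OF v filterlim_ident, of "\<lambda>_. y" y] y by simp
next
  fix i show "kcomb_fun K (Sq v i) \<in> borel_measurable \<mu>"
    using kfun_meas[OF Sq_centers] by simp
qed

lemma Lop_bound:
  assumes v: "integrable \<mu> v" and y: "y \<in> X"
  shows "\<bar>Lop v y\<bar> \<le> k2 * (\<integral>u. \<bar>v u\<bar> \<partial>\<mu>)"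
proof -
  have "(\<lambda>i. \<bar>kcomb_fun K (Sq v i) y\<bar>) \<longlonglongrightarrow> \<bar>Lop v y\<bar>"
    using Lim1[OF v filterlim_ident, of "\<lambda>_. y" y] y by (intro tendsto_rabs) simp
  then show ?thesis using kfun_bound[OF v y]
    by (intro LIMSEQ_le_const2) auto
qed

definition P :: "('a \<Rightarrow> real) \<Rightarrow> real" where
  "P v = (\<integral>u. v u * Lop v u \<partial>\<mu>)"

lemma Lim2:
  assumes v: "integrable \<mu> v" and m: "filterlim m at_top sequentially"
    and n: "filterlim n at_top sequentially"
  shows "(\<lambda>i. kb K (Sq v (m i)) (Sq v (n i))) \<longlonglongrightarrow> P v"
proof -
  have vm: "v \<in> borel_measurable \<mu>" using v by auto
  define B where "B = k2 * (\<integral>u. \<bar>v u\<bar> \<partial>\<mu>)"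
  have "(\<lambda>i. \<integral>u. v u * kcomb_fun K (Sq v (m i)) (q (n i) u) \<partial>\<mu>) \<longlonglongrightarrow> (\<integral>u. v u * Lop v u \<partial>\<mu>)"
  proof (rule integral_dominated_convergence[where w="\<lambda>u. B * \<bar>v u\<bar>"])
    show "(\<lambda>u. v u * Lop v u) \<in> borel_measurable \<mu>"
      using vm Lop_meas[OF v] by (rule borel_measurable_times)
    show "(\<lambda>u. v u * kcomb_fun K (Sq v (m i)) (q (n i) u)) \<in> borel_measurable \<mu>" for i
      using vm comp_q_meas by (rule borel_measurable_times)
    show "integrable \<mu> (\<lambda>u. B * \<bar>v u\<bar>)" using v by auto
    show "AE u in \<mu>. (\<lambda>i. v u * kcomb_fun K (Sq v (m i)) (q (n i) u)) \<longlonglongrightarrow> v u * Lop v u"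
    proof (rule AE_I2)
      fix u assume "u \<in> space \<mu>"
      then have u: "u \<in> X" using spc by simp
      have "(\<lambda>i. kcomb_fun K (Sq v (m i)) (q (n i) u)) \<longlonglongrightarrow> Lop v u"
        by (rule Lim1[OF v m q_in q_tendsto[OF u n] u])
      then show "(\<lambda>i. v u * kcomb_fun K (Sq v (m i)) (q (n i) u)) \<longlonglongrightarrow> v u * Lop v u"
        by (rule tendsto_mult[OF tendsto_const])
    qed
    show "AE u in \<mu>. norm (v u * kcomb_fun K (Sq v (m i)) (q (n i) u)) \<le> B * \<bar>v u\<bar>" for i
    proof (rule AE_I2)
      fix u assume "u \<in> space \<mu>"
      have "\<bar>kcomb_fun K (Sq v (m i)) (q (n i) u)\<bar> \<le> B" unfolding B_def by (intro kfun_bound v q_in)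
      then have "\<bar>v u\<bar> * \<bar>kcomb_fun K (Sq v (m i)) (q (n i) u)\<bar> \<le> \<bar>v u\<bar> * B" by (intro mult_left_mono) auto
      then show "norm (v u * kcomb_fun K (Sq v (m i)) (q (n i) u)) \<le> B * \<bar>v u\<bar>"
        by (simp add: abs_mult mult.commute)
    qed
  qed
  then show ?thesis by (simp add: kb_rep[OF v] P_def)
qed


lemma kcomb_sq_diff: "kcomb_sq K (A @ kcomb_neg B) = kb K A A - kb K A B - kb K B A + kb K B B"
  by (simp add: kcomb_sq_kb kb_append_l kb_append_r kb_neg_l kb_neg_r)

lemma Sq_approx:
  assumes v: "integrable \<mu> v"
  shows "rkhs_approx K X (Lop v) (Sq v)"
  unfolding rkhs_approx_def
proof (intro conjI allI impI ballI)
  show "snd ` set (Sq v n) \<subseteq> X" for n by (rule Sq_centers)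
next
  fix x assume x: "x \<in> X"
  show "(\<lambda>n. kcomb_fun K (Sq v n) x) \<longlonglongrightarrow> Lop v x"
    using Lim1[OF v filterlim_ident, of "\<lambda>_. x" x] x by simp
next
  fix e :: real assume e: "e > 0"
  show "\<exists>N. \<forall>m\<ge>N. \<forall>n\<ge>N. kcomb_sq K (Sq v m @ kcomb_neg (Sq v n)) < e"
  proof (rule ccontr)
    assume "\<not> ?thesis"
    then have "\<forall>N. \<exists>m. m \<ge> N \<and> (\<exists>n. n \<ge> N \<and> kcomb_sq K (Sq v m @ kcomb_neg (Sq v n)) \<ge> e)"
      by (auto simp: not_less)
    then obtain M where M: "\<And>N. M N \<ge> N \<and> (\<exists>n. n \<ge> N \<and> kcomb_sq K (Sq v (M N) @ kcomb_neg (Sq v n)) \<ge> e)"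
      by metis
    then obtain Nn where Nn: "\<And>N. Nn N \<ge> N \<and> kcomb_sq K (Sq v (M N) @ kcomb_neg (Sq v (Nn N))) \<ge> e"
      by metis
    have fM: "filterlim M at_top sequentially"
      by (rule filterlim_at_top_mono[OF filterlim_ident]) (use M in auto)
    have fN: "filterlim Nn at_top sequentially"
      by (rule filterlim_at_top_mono[OF filterlim_ident]) (use Nn in auto)
    have "(\<lambda>i. kb K (Sq v (M i)) (Sq v (M i)) - kb K (Sq v (M i)) (Sq v (Nn i))
             - kb K (Sq v (Nn i)) (Sq v (M i)) + kb K (Sq v (Nn i)) (Sq v (Nn i)))
          \<longlonglongrightarrow> P v - P v - P v + P v"
      by (intro tendsto_add tendsto_diff Lim2[OF v] fM fN)
    then have "(\<lambda>i. kcomb_sq K (Sq v (M i) @ kcomb_neg (Sq v (Nn i)))) \<longlonglongrightarrow> 0"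
      by (simp add: kcomb_sq_diff)
    moreover have "\<forall>i. e \<le> kcomb_sq K (Sq v (M i) @ kcomb_neg (Sq v (Nn i)))" using Nn by blast
    ultimately have "e \<le> 0" by (intro LIMSEQ_le_const) auto
    then show False using e by simp
  qed
qed

lemma kcomb_sq_lim:
  assumes v: "integrable \<mu> v"
  shows "(\<lambda>n. kcomb_sq K (Sq v n)) \<longlonglongrightarrow> P v"
  using Lim2[OF v filterlim_ident filterlim_ident] by (simp add: kcomb_sq_kb)

lemma P_nonneg:
  assumes v: "integrable \<mu> v"
  shows "0 \<le> P v"
  using kcomb_sq_lim[OF v] psd[OF Sq_centers] by (intro LIMSEQ_le_const) auto

lemma in_rkhs_Lop:
  assumes v: "integrable \<mu> v"
  shows "in_rkhs K X (Lop v)"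
  using Sq_approx[OF v] unfolding in_rkhs_def by blast

lemma rkhs_norm_Lop:
  assumes v: "integrable \<mu> v"
  shows "rkhs_norm K X (Lop v) = sqrt (P v)"
  by (rule rkhs_norm_eq[OF Sq_approx[OF v]]) (intro tendsto_real_sqrt kcomb_sq_lim[OF v])

lemma Lop_sq:
  assumes v: "integrable \<mu> v" and y: "y \<in> X"
  shows "(Lop v y)\<^sup>2 \<le> k2 * P v"
proof -
  have l1: "(\<lambda>n. (kcomb_fun K (Sq v n) y)\<^sup>2) \<longlonglongrightarrow> (Lop v y)\<^sup>2"
    using Lim1[OF v filterlim_ident, of "\<lambda>_. y" y] y by (intro tendsto_power) simp
  have l2: "(\<lambda>n. K y y * kcomb_sq K (Sq v n)) \<longlonglongrightarrow> K y y * P v"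
    by (intro tendsto_mult tendsto_const kcomb_sq_lim[OF v])
  have "(Lop v y)\<^sup>2 \<le> K y y * P v"
    using l1 l2 kfun_sq_le[OF Sq_centers y] by (intro LIMSEQ_le) auto
  also have "\<dots> \<le> k2 * P v"
    using Kbd[OF y y] P_nonneg[OF v] by (intro mult_right_mono) auto
  finally show ?thesis .
qed

end



context kop begin

lemma int_const: "integrable \<mu> (\<lambda>x. c::real)"
  using prob_space.finite_measure[OF prob] by (rule finite_measure.integrable_const)

lemma integral_const_mu: "(\<integral>x. (c::real) \<partial>\<mu>) = c"
  using prob_space.prob_space[OF prob] by simp

definition L2 :: "('a \<Rightarrow> real) \<Rightarrow> bool" where
  "L2 g \<longleftrightarrow> g \<in> borel_measurable \<mu> \<and> integrable \<mu> (\<lambda>x. (g x)\<^sup>2)"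

definition N2 :: "('a \<Rightarrow> real) \<Rightarrow> real" where
  "N2 g = sqrt (\<integral>x. (g x)\<^sup>2 \<partial>\<mu>)"

lemma L2_int:
  assumes "L2 g" shows "integrable \<mu> g"
proof -
  have i: "integrable \<mu> (\<lambda>x. 1 + (g x)\<^sup>2)" using assms int_const by (auto simp: L2_def)
  have m: "g \<in> borel_measurable \<mu>" using assms by (simp add: L2_def)
  have a: "AE x in \<mu>. norm (g x) \<le> norm (1 + (g x)\<^sup>2)"
  proof (rule AE_I2)
    fix x
    have e: "(\<bar>g x\<bar> - 1)\<^sup>2 = (g x)\<^sup>2 - 2*\<bar>g x\<bar> + 1"
      by (simp add: power2_eq_square algebra_simps)
    have "0 \<le> (\<bar>g x\<bar> - 1)\<^sup>2" by simp
    then have "\<bar>g x\<bar> \<le> 1 + (g x)\<^sup>2" unfolding e using zero_le_power2[of "g x"] by linarith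
    then show "norm (g x) \<le> norm (1 + (g x)\<^sup>2)" by simp
  qed
  from i m a show ?thesis by (rule Bochner_Integration.integrable_bound)
qed

lemma L2_prod:
  assumes "L2 f" "L2 g" shows "integrable \<mu> (\<lambda>x. f x * g x)"
proof -
  have i: "integrable \<mu> (\<lambda>x. (f x)\<^sup>2 + (g x)\<^sup>2)" using assms by (auto simp: L2_def)
  have m: "(\<lambda>x. f x * g x) \<in> borel_measurable \<mu>" using assms by (auto simp: L2_def)
  have a: "AE x in \<mu>. norm (f x * g x) \<le> norm ((f x)\<^sup>2 + (g x)\<^sup>2)"
  proof (rule AE_I2)
    fix x
    have e: "(\<bar>f x\<bar> - \<bar>g x\<bar>)\<^sup>2 = (f x)\<^sup>2 - 2*(\<bar>f x\<bar> * \<bar>g x\<bar>) + (g x)\<^sup>2"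
      by (simp add: power2_eq_square algebra_simps)
    have "0 \<le> (\<bar>f x\<bar> - \<bar>g x\<bar>)\<^sup>2" by simp
    then have "\<bar>f x\<bar> * \<bar>g x\<bar> \<le> (f x)\<^sup>2 + (g x)\<^sup>2"
      unfolding e using zero_le_power2[of "f x"] zero_le_power2[of "g x"] by linarith
    then show "norm (f x * g x) \<le> norm ((f x)\<^sup>2 + (g x)\<^sup>2)" by (simp add: abs_mult)
  qed
  from i m a show ?thesis by (rule Bochner_Integration.integrable_bound)
qed

lemma L2_add: "L2 f \<Longrightarrow> L2 g \<Longrightarrow> L2 (\<lambda>x. f x + g x)"
proof -
  assume f: "L2 f" and g: "L2 g"
  have "integrable \<mu> (\<lambda>x. (f x)\<^sup>2 + 2 * (f x * g x) + (g x)\<^sup>2)"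
    using f g L2_prod[OF f g] by (auto simp: L2_def)
  moreover have "(\<lambda>x. (f x)\<^sup>2 + 2 * (f x * g x) + (g x)\<^sup>2) = (\<lambda>x. (f x + g x)\<^sup>2)"
    by (auto simp: power2_eq_square algebra_simps)
  ultimately show ?thesis using f g by (auto simp: L2_def)
qed

lemma L2_scale: "L2 f \<Longrightarrow> L2 (\<lambda>x. c * f x)"
  by (auto simp: L2_def power_mult_distrib)

lemma L2_bdd: "g \<in> borel_measurable \<mu> \<Longrightarrow> (\<And>x. x \<in> space \<mu> \<Longrightarrow> \<bar>g x\<bar> \<le> B) \<Longrightarrow> L2 g"
proof -
  assume m: "g \<in> borel_measurable \<mu>" and b: "\<And>x. x \<in> space \<mu> \<Longrightarrow> \<bar>g x\<bar> \<le> B"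
  have "integrable \<mu> (\<lambda>x. (g x)\<^sup>2)"
  proof (rule Bochner_Integration.integrable_bound[OF int_const[of "B\<^sup>2"]])
    show "(\<lambda>x. (g x)\<^sup>2) \<in> borel_measurable \<mu>" using m by auto
    show "AE x in \<mu>. norm ((g x)\<^sup>2) \<le> norm (B\<^sup>2)"
    proof (rule AE_I2)
      fix x assume "x \<in> space \<mu>"
      then have "\<bar>g x\<bar> \<le> B" by (rule b)
      then have "\<bar>g x\<bar>\<^sup>2 \<le> B\<^sup>2" by (intro power_mono) auto
      then show "norm ((g x)\<^sup>2) \<le> norm (B\<^sup>2)" by simp
    qed
  qed
  then show ?thesis using m by (simp add: L2_def)
qed

lemma L2_cong: "L2 f \<Longrightarrow> (\<And>x. x \<in> space \<mu> \<Longrightarrow> f x = g x) \<Longrightarrow> L2 g"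
proof -
  assume f: "L2 f" and e: "\<And>x. x \<in> space \<mu> \<Longrightarrow> f x = g x"
  have "g \<in> borel_measurable \<mu>" using f e measurable_cong[of \<mu> f g] by (auto simp: L2_def)
  moreover have "integrable \<mu> (\<lambda>x. (g x)\<^sup>2)"
    using f e Bochner_Integration.integrable_cong[OF refl, of \<mu> "\<lambda>x. (f x)\<^sup>2" "\<lambda>x. (g x)\<^sup>2"]
    by (auto simp: L2_def)
  ultimately show ?thesis by (simp add: L2_def)
qed

lemma N2_cong: "(\<And>x. x \<in> space \<mu> \<Longrightarrow> f x = g x) \<Longrightarrow> N2 f = N2 g"
  unfolding N2_def by (metis (mono_tags, lifting) Bochner_Integration.integral_cong)

lemma sq_int_nonneg: "0 \<le> (\<integral>x. (g x :: real)\<^sup>2 \<partial>\<mu>)" by (rule Bochner_Integration.integral_nonneg) simp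

lemma N2_nonneg: "0 \<le> N2 g" using sq_int_nonneg[of g] by (simp add: N2_def)

lemma N2_sq: "(N2 g)\<^sup>2 = (\<integral>x. (g x)\<^sup>2 \<partial>\<mu>)" using sq_int_nonneg[of g] by (simp add: N2_def)

lemma CS:
  assumes f: "L2 f" and g: "L2 g"
  shows "\<bar>\<integral>x. f x * g x \<partial>\<mu>\<bar> \<le> N2 f * N2 g"
proof -
  have "(\<integral>x. f x * g x \<partial>\<mu>)\<^sup>2 \<le> (\<integral>x. (f x)\<^sup>2 \<partial>\<mu>) * (\<integral>x. (g x)\<^sup>2 \<partial>\<mu>)"
  proof (rule discr_le)
    fix t
    have "0 \<le> (\<integral>x. (f x + t * g x)\<^sup>2 \<partial>\<mu>)" by (rule sq_int_nonneg)
    also have "\<dots> = (\<integral>x. (f x)\<^sup>2 + 2 * t * (f x * g x) + t\<^sup>2 * (g x)\<^sup>2 \<partial>\<mu>)"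
      by (rule Bochner_Integration.integral_cong) (auto simp: power2_eq_square algebra_simps)
    also have "\<dots> = (\<integral>x. (f x)\<^sup>2 \<partial>\<mu>) + 2 * t * (\<integral>x. f x * g x \<partial>\<mu>) + t\<^sup>2 * (\<integral>x. (g x)\<^sup>2 \<partial>\<mu>)"
      using f g L2_prod[OF f g] by (simp add: L2_def)
    finally show "0 \<le> (\<integral>x. (f x)\<^sup>2 \<partial>\<mu>) + 2 * t * (\<integral>x. f x * g x \<partial>\<mu>) + t\<^sup>2 * (\<integral>x. (g x)\<^sup>2 \<partial>\<mu>)" .
  qed
  then have "sqrt ((\<integral>x. f x * g x \<partial>\<mu>)\<^sup>2) \<le> sqrt ((\<integral>x. (f x)\<^sup>2 \<partial>\<mu>) * (\<integral>x. (g x)\<^sup>2 \<partial>\<mu>))"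
    by (rule real_sqrt_le_mono)
  then show ?thesis by (simp add: N2_def real_sqrt_mult)
qed

lemma N2_add:
  assumes f: "L2 f" and g: "L2 g"
  shows "N2 (\<lambda>x. f x + g x) \<le> N2 f + N2 g"
proof -
  have "(N2 (\<lambda>x. f x + g x))\<^sup>2 = (\<integral>x. (f x)\<^sup>2 + 2 * (f x * g x) + (g x)\<^sup>2 \<partial>\<mu>)"
    unfolding N2_sq by (rule Bochner_Integration.integral_cong) (auto simp: power2_eq_square algebra_simps)
  also have "\<dots> = (N2 f)\<^sup>2 + 2 * (\<integral>x. f x * g x \<partial>\<mu>) + (N2 g)\<^sup>2"
    using f g L2_prod[OF f g] by (simp add: L2_def N2_sq)
  also have "\<dots> \<le> (N2 f)\<^sup>2 + 2 * (N2 f * N2 g) + (N2 g)\<^sup>2"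
    using CS[OF f g] by simp
  also have "\<dots> = (N2 f + N2 g)\<^sup>2" by (simp add: power2_eq_square algebra_simps)
  finally show ?thesis
    using N2_nonneg[of f] N2_nonneg[of g] N2_nonneg[of "\<lambda>x. f x + g x"]
    by (meson add_nonneg_nonneg power2_le_imp_le)
qed

lemma N2_scale: "N2 (\<lambda>x. c * f x) = \<bar>c\<bar> * N2 f"
  by (simp add: N2_def power_mult_distrib real_sqrt_mult)


lemma L2_Lop: "L2 g \<Longrightarrow> L2 (Lop g)"
  using L2_bdd[OF Lop_meas[OF L2_int] Lop_bound[OF L2_int]] spc by auto

lemma op_contract:
  assumes g: "L2 g" and ga: "0 \<le> \<gamma>" and c: "\<gamma> * k2 \<le> c"
  shows "N2 (\<lambda>x. c * g x - \<gamma> * Lop g x) \<le> c * N2 g"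
proof -
  have gi: "integrable \<mu> g" by (rule L2_int[OF g])
  have Lg: "L2 (Lop g)" by (rule L2_Lop[OF g])
  have c0: "0 \<le> c" using ga k2_nonneg c by (meson mult_nonneg_nonneg order_trans)
  have P0: "0 \<le> P g" by (rule P_nonneg[OF gi])
  have "(N2 (\<lambda>x. c * g x - \<gamma> * Lop g x))\<^sup>2
      = (\<integral>x. c\<^sup>2 * (g x)\<^sup>2 - 2 * c * \<gamma> * (g x * Lop g x) + \<gamma>\<^sup>2 * (Lop g x)\<^sup>2 \<partial>\<mu>)"
    unfolding N2_sq by (rule Bochner_Integration.integral_cong) (auto simp: power2_eq_square algebra_simps)
  also have "\<dots> = c\<^sup>2 * (\<integral>x. (g x)\<^sup>2 \<partial>\<mu>) - 2 * c * \<gamma> * (\<integral>x. g x * Lop g x \<partial>\<mu>)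
                   + \<gamma>\<^sup>2 * (\<integral>x. (Lop g x)\<^sup>2 \<partial>\<mu>)"
    using g Lg L2_prod[OF g Lg] by (simp add: L2_def)
  also have "(\<integral>x. g x * Lop g x \<partial>\<mu>) = P g" by (simp add: P_def)
  also have "(\<integral>x. (Lop g x)\<^sup>2 \<partial>\<mu>) \<le> (\<integral>x. k2 * P g \<partial>\<mu>)"
  proof (rule integral_mono)
    show "integrable \<mu> (\<lambda>x. (Lop g x)\<^sup>2)" using Lg by (simp add: L2_def)
    show "integrable \<mu> (\<lambda>x. k2 * P g)" by (rule int_const)
    fix x assume "x \<in> space \<mu>"
    then show "(Lop g x)\<^sup>2 \<le> k2 * P g" using Lop_sq[OF gi] spc by simp
  qed
  also have "(\<integral>x. k2 * P g \<partial>\<mu>) = k2 * P g" by (rule integral_const_mu)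
  finally have "(N2 (\<lambda>x. c * g x - \<gamma> * Lop g x))\<^sup>2
      \<le> c\<^sup>2 * (\<integral>x. (g x)\<^sup>2 \<partial>\<mu>) - 2 * c * \<gamma> * P g + \<gamma>\<^sup>2 * (k2 * P g)"
    by (simp add: mult_left_mono)
  also have "\<gamma>\<^sup>2 * (k2 * P g) = \<gamma> * (\<gamma> * k2) * P g" by (simp add: power2_eq_square)
  also have "\<dots> \<le> \<gamma> * c * P g" using c ga P0 by (intro mult_right_mono mult_left_mono) auto
  finally have "(N2 (\<lambda>x. c * g x - \<gamma> * Lop g x))\<^sup>2 \<le> c\<^sup>2 * (\<integral>x. (g x)\<^sup>2 \<partial>\<mu>) - c * \<gamma> * P g"
    by (simp add: algebra_simps)
  also have "\<dots> \<le> c\<^sup>2 * (\<integral>x. (g x)\<^sup>2 \<partial>\<mu>)" using c0 ga P0 by simp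
  also have "\<dots> = (c * N2 g)\<^sup>2" by (simp add: power_mult_distrib N2_sq)
  finally show ?thesis
    using c0 N2_nonneg[of g] by (meson mult_nonneg_nonneg power2_le_imp_le)
qed

lemma Lop_lin:
  assumes u: "integrable \<mu> u" and w: "integrable \<mu> w" and y: "y \<in> X"
  shows "Lop (\<lambda>x. a * u x + b * w x) y = a * Lop u y + b * Lop w y"
proof -
  have iu: "integrable \<mu> (\<lambda>x. u x * K x y)"
    by (rule integrable_mult_bdd[OF u Kmeas1[OF y], where B=k2]) (auto intro: Kbd y simp: spc)
  have iw: "integrable \<mu> (\<lambda>x. w x * K x y)"
    by (rule integrable_mult_bdd[OF w Kmeas1[OF y], where B=k2]) (auto intro: Kbd y simp: spc)
  have "Lop (\<lambda>x. a * u x + b * w x) y = (\<integral>x. a * (u x * K x y) + b * (w x * K x y) \<partial>\<mu>)"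
    unfolding Lop_def by (rule Bochner_Integration.integral_cong) (auto simp: algebra_simps)
  also have "\<dots> = a * Lop u y + b * Lop w y"
    using iu iw by (simp add: Lop_def)
  finally show ?thesis .
qed

lemma Lop_cong: "(\<And>x. x \<in> space \<mu> \<Longrightarrow> u x = w x) \<Longrightarrow> Lop u y = Lop w y"
  unfolding Lop_def by (metis (mono_tags, lifting) Bochner_Integration.integral_cong)

lemma LK_Lop: "y \<in> X \<Longrightarrow> LK K \<mu> g y = Lop g y"
  unfolding LK_def Lop_def
  by (rule Bochner_Integration.integral_cong) (auto simp: spc symK)

end



lemma marg_props:
  fixes X :: "'a::euclidean_space set" and rho :: "('a \<times> real) measure" and M :: real
  assumes X_closed: "closed X" and rho_prob: "prob_space rho"
    and rho_sets: "sets rho = sets (borel :: ('a \<times> real) measure)"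
    and rho_supp: "emeasure rho (UNIV - X \<times> {-M..M}) = 0"
  shows "prob_space (marginal rho X)" "space (marginal rho X) = X"
    "sets (marginal rho X) = sets (restrict_space borel X)"
proof -
  have fb: "fst \<in> (borel :: ('a \<times> real) measure) \<rightarrow>\<^sub>M borel"
    by (intro borel_measurable_continuous_onI continuous_on_fst continuous_on_id)
  have fm: "fst \<in> rho \<rightarrow>\<^sub>M borel"
    using fb measurable_cong_sets[OF rho_sets refl] by blast
  have sp: "space rho = UNIV" using sets_eq_imp_space_eq[OF rho_sets] by simp
  define D where "D = distr rho borel (fst :: 'a \<times> real \<Rightarrow> 'a)"
  have spD: "space D = UNIV" by (simp add: D_def)
  have setsD: "sets D = sets borel" by (simp add: D_def)
  have XD: "X \<in> sets D" using X_closed by (simp add: setsD)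
  have N: "UNIV - X \<times> {-M..M} \<in> null_sets rho"
  proof -
    have "closed (X \<times> {-M..M})" using X_closed by (intro closed_Times) auto
    then have "X \<times> {-M..M} \<in> sets rho" by (simp add: rho_sets)
    then have "UNIV - X \<times> {-M..M} \<in> sets rho" using sp by (metis sets.compl_sets)
    then show ?thesis using rho_supp by (simp add: null_sets_def)
  qed
  have "AE z in rho. z \<in> X \<times> UNIV"
    by (rule AE_I'[OF N]) auto
  moreover have "X \<times> UNIV \<in> sets rho"
    using X_closed by (simp add: rho_sets) (intro borel_closed closed_Times, auto)
  ultimately have "emeasure rho (X \<times> UNIV) = 1"
    by (intro prob_space.emeasure_eq_1_AE[OF rho_prob])
  moreover have "fst -` X \<inter> space rho = X \<times> UNIV" using sp by auto
  ultimately have "emeasure D X = 1"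
    using emeasure_distr[OF fm, of X] X_closed by (simp add: D_def)
  then show "prob_space (marginal rho X)"
    unfolding marginal_def D_def[symmetric] by (rule prob_space_restrict_space[OF XD])
  show "space (marginal rho X) = X"
    unfolding marginal_def D_def[symmetric] by (simp add: space_restrict_space spD)
  show "sets (marginal rho X) = sets (restrict_space borel X)"
    unfolding marginal_def D_def[symmetric] by (simp add: sets_restrict_space setsD)
qed


lemma regr_props:
  fixes X :: "'a::euclidean_space set" and rho :: "('a \<times> real) measure" and M :: real
    and condY :: "'a \<Rightarrow> real measure"
  assumes X_closed: "closed X" and rho_prob: "prob_space rho"
    and rho_sets: "sets rho = sets (borel :: ('a \<times> real) measure)"
    and rho_supp: "emeasure rho (UNIV - X \<times> {-M..M}) = 0"
    and cond_prob: "\<forall>x\<in>X. prob_space (condY x) \<and> sets (condY x) = sets (borel :: real measure)"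
    and cond_meas: "condY \<in> marginal rho X \<rightarrow>\<^sub>M subprob_algebra borel"
    and disint: "\<forall>A\<in>sets (marginal rho X). \<forall>B\<in>sets (borel :: real measure).
                   emeasure rho (A \<times> B) = (\<integral>\<^sup>+x. indicator A x * emeasure (condY x) B \<partial>marginal rho X)"
  shows "regr condY \<in> borel_measurable (marginal rho X)"
    "AE x in marginal rho X. \<bar>regr condY x\<bar> \<le> M"
proof -
  note mp = marg_props[OF X_closed rho_prob rho_sets rho_supp]
  define \<mu> where "\<mu> = marginal rho X"
  have "(\<lambda>x. (\<lambda>N. integral\<^sup>L N (\<lambda>y::real. y)) (condY x)) \<in> borel_measurable (marginal rho X)"
    by (rule measurable_compose[OF cond_meas integral_measurable_subprob_algebra]) simp
  then show "regr condY \<in> borel_measurable (marginal rho X)"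
    by (simp add: regr_def[abs_def])
  define B where "B = (UNIV - {-M..M} :: real set)"
  have Bs: "B \<in> sets (borel :: real measure)" by (simp add: B_def)
  have Xs: "X \<in> sets \<mu>" using sets.top[of \<mu>] mp(2) by (simp add: \<mu>_def)
  have "emeasure rho (X \<times> B) \<le> emeasure rho (UNIV - X \<times> {-M..M})"
  proof (rule emeasure_mono)
    show "X \<times> B \<subseteq> UNIV - X \<times> {-M..M}" by (auto simp: B_def)
    have "closed (X \<times> {-M..M})" using X_closed by (intro closed_Times) auto
    then have "X \<times> {-M..M} \<in> sets rho" by (simp add: rho_sets)
    moreover have "space rho = UNIV" using sets_eq_imp_space_eq[OF rho_sets] by simp
    ultimately show "UNIV - X \<times> {-M..M} \<in> sets rho" by (metis sets.compl_sets)
  qed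
  then have "emeasure rho (X \<times> B) = 0" using rho_supp by simp
  then have "(\<integral>\<^sup>+x. indicator X x * emeasure (condY x) B \<partial>\<mu>) = 0"
    using disint Xs Bs by (simp add: \<mu>_def)
  moreover have "(\<integral>\<^sup>+x. indicator X x * emeasure (condY x) B \<partial>\<mu>) = (\<integral>\<^sup>+x. emeasure (condY x) B \<partial>\<mu>)"
    by (rule nn_integral_cong) (simp add: mp(2) \<mu>_def)
  ultimately have z: "(\<integral>\<^sup>+x. emeasure (condY x) B \<partial>\<mu>) = 0" by simp
  have em: "(\<lambda>x. emeasure (condY x) B) \<in> borel_measurable \<mu>"
    unfolding \<mu>_def by (rule measurable_compose[OF cond_meas measurable_emeasure_subprob_algebra[OF Bs]])
  have ae: "AE x in \<mu>. emeasure (condY x) B = 0" using z nn_integral_0_iff_AE[OF em] by simp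
  show "AE x in marginal rho X. \<bar>regr condY x\<bar> \<le> M"
    unfolding \<mu>_def[symmetric]
  proof (rule AE_mp[OF ae], rule AE_I2, rule impI)
    fix x assume "x \<in> space \<mu>" and e0: "emeasure (condY x) B = 0"
    then have x: "x \<in> X" using mp(2) by (simp add: \<mu>_def)
    have pN: "prob_space (condY x)" and sN: "sets (condY x) = sets borel" using cond_prob x by auto
    have BN: "B \<in> null_sets (condY x)" using e0 Bs sN by (simp add: null_sets_def)
    have aeN: "AE y in condY x. \<bar>y\<bar> \<le> M"
      by (rule AE_I'[OF BN]) (auto simp: B_def)
    have "\<bar>regr condY x\<bar> \<le> (\<integral>y. \<bar>y\<bar> \<partial>condY x)" unfolding regr_def by (rule integral_abs_bound)
    also have "\<dots> \<le> (\<integral>y. M \<partial>condY x)"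
    proof (rule integral_mono_AE')
      show "integrable (condY x) (\<lambda>y. M)"
        using prob_space.finite_measure[OF pN] by (rule finite_measure.integrable_const)
      show "AE y in condY x. \<bar>y\<bar> \<le> M" by (rule aeN)
      show "AE y in condY x. 0 \<le> M"
        using aeN by eventually_elim (meson abs_ge_zero order_trans)
    qed
    also have "\<dots> = M" using prob_space.prob_space[OF pN] by simp
    finally show "\<bar>regr condY x\<bar> \<le> M" .
  qed
qed


lemma kernel_facts:
  fixes K :: "'a::topological_space \<Rightarrow> 'a \<Rightarrow> real"
  assumes mer: "mercer_kernel K X" and bdd: "bdd_above ((\<lambda>x. K x x) ` X)"
  shows "kern K X" "\<And>x y. x \<in> X \<Longrightarrow> y \<in> X \<Longrightarrow> \<bar>K x y\<bar> \<le> (kappa K X)\<^sup>2"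
proof -
  show kk: "kern K X" using mer by unfold_locales (auto simp: mercer_kernel_def)
  have Kxx0: "0 \<le> K x x" if "x \<in> X" for x
    using kern.psd[OF kk, of "[(1,x)]"] that by (simp add: kcomb_sq_def)
  obtain B where B: "\<And>x. x \<in> X \<Longrightarrow> K x x \<le> B" using bdd by (auto simp: bdd_above_def)
  have bs: "bdd_above ((\<lambda>x. sqrt (K x x)) ` X)"
    by (rule bdd_aboveI2[where M="sqrt B"]) (auto intro: B)
  have Kxx: "K x x \<le> (kappa K X)\<^sup>2" if x: "x \<in> X" for x
  proof -
    have "sqrt (K x x) \<le> kappa K X" unfolding kappa_def by (rule cSUP_upper[OF x bs])
    then have "(sqrt (K x x))\<^sup>2 \<le> (kappa K X)\<^sup>2" using Kxx0[OF x] by (intro power_mono) auto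
    then show ?thesis using Kxx0[OF x] by simp
  qed
  fix x y assume x: "x \<in> X" and y: "y \<in> X"
  have "(kcomb_fun K [(1,x)] y)\<^sup>2 \<le> K y y * kcomb_sq K [(1,x)]"
    using x y by (intro kern.kfun_sq_le[OF kk]) auto
  then have "(K x y)\<^sup>2 \<le> K y y * K x x" by (simp add: kcomb_fun_def kcomb_sq_def)
  also have "\<dots> \<le> (kappa K X)\<^sup>2 * (kappa K X)\<^sup>2"
    using Kxx[OF x] Kxx[OF y] Kxx0[OF x] Kxx0[OF y] by (intro mult_mono) auto
  finally have "\<bar>K x y\<bar>\<^sup>2 \<le> ((kappa K X)\<^sup>2)\<^sup>2" by (simp add: power2_eq_square)
  then show "\<bar>K x y\<bar> \<le> (kappa K X)\<^sup>2" by (rule power2_le_imp_le) simp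
qed

lemma dense_seq:
  fixes X :: "'a::euclidean_space set"
  assumes "X \<noteq> {}"
  obtains d :: "nat \<Rightarrow> 'a" where "\<And>k. d k \<in> X" "\<And>x e. x \<in> X \<Longrightarrow> e > 0 \<Longrightarrow> \<exists>k. dist x (d k) < e"
proof -
  obtain T where T: "countable T" "T \<subseteq> X" "X \<subseteq> closure T" by (rule separable)
  have Tne: "T \<noteq> {}"
  proof
    assume "T = {}"
    then have "X \<subseteq> {}" using T(3) by simp
    then show False using assms by simp
  qed
  define d where "d = from_nat_into T"
  have rd: "range d = T" unfolding d_def by (rule range_from_nat_into[OF Tne T(1)])
  show ?thesis
  proof (rule that[of d])
    show "d k \<in> X" for k using from_nat_into[OF Tne, of k] T(2) unfolding d_def by blast
    fix x and e :: real assume x: "x \<in> X" and e: "e > 0"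
    then have "x \<in> closure T" using T(3) by blast
    then have "\<forall>e>0. \<exists>y\<in>T. dist y x < e" by (simp only: closure_approachable)
    then obtain t where t: "t \<in> T" "dist t x < e" using e by blast
    then have "t \<in> range d" using rd by simp
    then obtain k where "t = d k" by (rule rangeE)
    then show "\<exists>k. dist x (d k) < e" using t(2) by (metis dist_commute)
  qed
qed

lemma param_facts:
  fixes \<theta> t0 a b k2 :: real
  assumes th: "0 \<le> \<theta>" "\<theta> \<le> 1" and t0: "0 < t0" and a: "0 < a" and b: "0 < b"
    and k2: "0 \<le> k2" and big: "t0 powr \<theta> \<ge> a * (k2 + b)"
  shows "0 < gam a \<theta> t0 t" "0 < lam b \<theta> t0 t"
    "lam b \<theta> t0 (Suc t) \<le> lam b \<theta> t0 t"
    "gam a \<theta> t0 (Suc t) * (k2 + lam b \<theta> t0 (Suc t)) \<le> 1"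
proof -
  show "0 < gam a \<theta> t0 t" using a t0 by (simp add: gam_def)
  show "0 < lam b \<theta> t0 t" using b t0 by (simp add: lam_def)
  have "(real (Suc t) + t0) powr (- (1 - \<theta>)) \<le> (real t + t0) powr (- (1 - \<theta>))"
    using th t0 by (intro powr_mono2') auto
  then show "lam b \<theta> t0 (Suc t) \<le> lam b \<theta> t0 t" using b by (simp add: lam_def)
  define x where "x = real (Suc t) + t0"
  have x0: "0 < x" using t0 by (simp add: x_def)
  have tp: "0 < t0 powr \<theta>" using t0 by simp
  have "gam a \<theta> t0 (Suc t) * lam b \<theta> t0 (Suc t) = a * b * (x powr (-\<theta>) * x powr (-(1-\<theta>)))"
    by (simp add: gam_def lam_def x_def algebra_simps)
  also have "x powr (-\<theta>) * x powr (-(1-\<theta>)) = x powr (-1)" by (simp add: powr_add[symmetric])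
  also have "\<dots> = 1 / x" using x0 by (simp add: powr_minus_divide)
  finally have gl: "gam a \<theta> t0 (Suc t) * lam b \<theta> t0 (Suc t) = a * b / x" by simp
  have g1: "x powr (-\<theta>) \<le> t0 powr (-\<theta>)" using th t0 by (intro powr_mono2') (auto simp: x_def)
  have tx: "t0 powr \<theta> \<le> x"
  proof (cases "t0 \<ge> 1")
    case True
    then have "t0 powr \<theta> \<le> t0 powr 1" using th by (intro powr_mono) auto
    then show ?thesis using t0 by (simp add: x_def)
  next
    case False
    then have "t0 powr \<theta> \<le> 1" using th t0 by (intro powr_le1) auto
    then show ?thesis using t0 unfolding x_def by simp
  qed
  have "a * b / x \<le> a * b / t0 powr \<theta>" using tx tp a b x0 by (intro divide_left_mono) auto
  moreover have "gam a \<theta> t0 (Suc t) * k2 \<le> a * k2 / t0 powr \<theta>"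
  proof -
    have "gam a \<theta> t0 (Suc t) * k2 = a * k2 * x powr (-\<theta>)" by (simp add: gam_def x_def)
    also have "\<dots> \<le> a * k2 * t0 powr (-\<theta>)" using g1 a k2 by (intro mult_left_mono) auto
    finally show ?thesis by (simp add: powr_minus_divide)
  qed
  moreover have "a * k2 / t0 powr \<theta> + a * b / t0 powr \<theta> \<le> 1"
    using big tp by (simp add: add_divide_distrib[symmetric] algebra_simps)
  ultimately show "gam a \<theta> t0 (Suc t) * (k2 + lam b \<theta> t0 (Suc t)) \<le> 1"
    using gl by (simp add: algebra_simps)
qed

primrec wseq :: "(nat \<Rightarrow> 'a \<Rightarrow> real) \<Rightarrow> (nat \<Rightarrow> real) \<Rightarrow> (nat \<Rightarrow> real) \<Rightarrow> nat \<Rightarrow> 'a \<Rightarrow> real" where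
  "wseq G gm lm 0 = (\<lambda>x. 0)"
| "wseq G gm lm (Suc t) = (\<lambda>x. (1 - gm (Suc t) * lm (Suc t)) * wseq G gm lm t x - gm (Suc t) * G t x)"



theorem lemmaB3:
  fixes X :: "'a::euclidean_space set"
    and rho :: "('a \<times> real) measure"
    and condY :: "'a \<Rightarrow> real measure"
    and K :: "'a \<Rightarrow> 'a \<Rightarrow> real"
    and M \<theta> t0 a b :: real
  assumes X_closed: "closed X"
    and rho_prob: "prob_space rho"
    and rho_sets: "sets rho = sets (borel :: ('a \<times> real) measure)"
    and M_nonneg: "0 \<le> M"
    and rho_supp: "emeasure rho (UNIV - X \<times> {-M..M}) = 0"
    and cond_prob: "\<forall>x\<in>X. prob_space (condY x) \<and> sets (condY x) = sets (borel :: real measure)"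
    and cond_meas: "condY \<in> marginal rho X \<rightarrow>\<^sub>M subprob_algebra borel"
    and disint: "\<forall>A\<in>sets (marginal rho X). \<forall>B\<in>sets (borel :: real measure).
                   emeasure rho (A \<times> B) = (\<integral>\<^sup>+x. indicator A x * emeasure (condY x) B \<partial>marginal rho X)"
    and K_mercer: "mercer_kernel K X"
    and K_bdd: "bdd_above ((\<lambda>x. K x x) ` X)"
    and LK_pos: "\<forall>g. g \<in> borel_measurable (marginal rho X)
                    \<and> integrable (marginal rho X) (\<lambda>x. (g x)\<^sup>2)
                    \<and> (AE x in marginal rho X. LK K (marginal rho X) g x = 0)
                    \<longrightarrow> (AE x in marginal rho X. g x = 0)"
    and \<theta>_range: "0 \<le> \<theta>" "\<theta> \<le> 1"
    and t0_pos: "0 < t0"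
    and a_range: "0 < a" "a < t0 powr \<theta>"
    and b_range: "0 < b" "b < t0 powr (1 - \<theta>)"
    and t0_big: "t0 powr \<theta> \<ge> a * ((kappa K X)\<^sup>2 + b)"
  shows "\<forall>t. integrable (marginal rho X) (\<lambda>x. (gseq K (marginal rho X) (regr condY) (gam a \<theta> t0) (lam b \<theta> t0) t x)\<^sup>2)
          \<and> L2norm (marginal rho X) (gseq K (marginal rho X) (regr condY) (gam a \<theta> t0) (lam b \<theta> t0) t) \<le> M
          \<and> in_rkhs K X (\<lambda>x. gseq K (marginal rho X) (regr condY) (gam a \<theta> t0) (lam b \<theta> t0) t x + regr condY x)
          \<and> rkhs_norm K X (\<lambda>x. gseq K (marginal rho X) (regr condY) (gam a \<theta> t0) (lam b \<theta> t0) t x + regr condY x)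
              \<le> 3 * M / sqrt (lam b \<theta> t0 t)"
proof -
  note mp = marg_props[OF X_closed rho_prob rho_sets rho_supp]
  note rp = regr_props[OF X_closed rho_prob rho_sets rho_supp cond_prob cond_meas disint]
  define \<mu> where "\<mu> = marginal rho X"
  define k2 where "k2 = (kappa K X)\<^sup>2"
  define f where "f = regr condY"
  define gm where "gm = gam a \<theta> t0"
  define lm where "lm = lam b \<theta> t0"
  define G where "G = gseq K \<mu> f gm lm"
  define W where "W = wseq G gm lm"
  have Xne: "X \<noteq> {}" using prob_space.not_empty[OF mp(1)] mp(2) by simp
  obtain d :: "nat \<Rightarrow> 'a" where dX: "\<And>k. d k \<in> X"
    and dd: "\<And>x e. x \<in> X \<Longrightarrow> e > 0 \<Longrightarrow> \<exists>k. dist x (d k) < e"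
    using dense_seq[OF Xne] by blast
  note kf = kernel_facts[OF K_mercer K_bdd]
  have ka: "kop_axioms K X \<mu> k2 d"
  proof (unfold kop_axioms_def, intro conjI)
    show "prob_space \<mu>" using mp(1) by (simp add: \<mu>_def)
    show "space \<mu> = X" using mp(2) by (simp add: \<mu>_def)
    show "sets \<mu> = sets (restrict_space borel X)" using mp(3) by (simp add: \<mu>_def)
    show "continuous_on (X \<times> X) (\<lambda>(x, y). K x y)" using K_mercer by (simp add: mercer_kernel_def)
    show "\<forall>x y. x \<in> X \<longrightarrow> y \<in> X \<longrightarrow> \<bar>K x y\<bar> \<le> k2" using kf(2) by (simp add: k2_def)
    show "\<forall>k. d k \<in> X" using dX by blast
    show "\<forall>x e. x \<in> X \<longrightarrow> 0 < e \<longrightarrow> (\<exists>k. dist x (d k) < e)" using dd by blast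
  qed
  interpret kop K X \<mu> k2 d by (rule kop.intro[OF kf(1) ka])
  have fm: "f \<in> borel_measurable \<mu>" unfolding f_def \<mu>_def by (rule rp(1))
  have fae: "AE x in \<mu>. \<bar>f x\<bar> \<le> M" unfolding f_def \<mu>_def by (rule rp(2))
  have fL2: "L2 f"
  proof -
    have "integrable \<mu> (\<lambda>x. (f x)\<^sup>2)"
    proof (rule Bochner_Integration.integrable_bound[OF int_const[of "M\<^sup>2"]])
      show "(\<lambda>x. (f x)\<^sup>2) \<in> borel_measurable \<mu>" using fm by auto
      show "AE x in \<mu>. norm ((f x)\<^sup>2) \<le> norm (M\<^sup>2)"
        using fae by eventually_elim (simp, metis abs_ge_zero power2_abs power_mono)
    qed
    then show ?thesis using fm by (simp add: L2_def)
  qed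
  have fN: "N2 f \<le> M"
  proof -
    have "(\<integral>x. (f x)\<^sup>2 \<partial>\<mu>) \<le> (\<integral>x. M\<^sup>2 \<partial>\<mu>)"
    proof (rule integral_mono_AE')
      show "integrable \<mu> (\<lambda>x. M\<^sup>2)" by (rule int_const)
      show "AE x in \<mu>. (f x)\<^sup>2 \<le> M\<^sup>2"
        using fae by eventually_elim (metis abs_ge_zero power2_abs power_mono)
      show "AE x in \<mu>. 0 \<le> M\<^sup>2" by simp
    qed
    then have "(N2 f)\<^sup>2 \<le> M\<^sup>2" using prob_space.prob_space[OF prob] by (simp add: N2_sq)
    then show ?thesis using M_nonneg by (rule power2_le_imp_le)
  qed
  have k20: "0 \<le> k2" by (rule k2_nonneg)
  note pf = param_facts[OF \<theta>_range t0_pos a_range(1) b_range(1) k20 t0_big[folded k2_def]]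
  have gpos: "0 < gm t" and lpos: "0 < lm t" for t using pf by (auto simp: gm_def lm_def)
  have ldec: "lm (Suc t) \<le> lm t" for t using pf by (simp add: lm_def)
  have gle: "gm (Suc t) * (k2 + lm (Suc t)) \<le> 1" for t using pf by (simp add: gm_def lm_def)
  have inv: "L2 (G t) \<and> N2 (G t) \<le> M \<and> L2 (W t) \<and> N2 (W t) \<le> M / lm t
             \<and> (\<forall>x\<in>X. G t x + f x = Lop (W t) x)" for t
  proof (induction t)
    case 0
    have "L2 (G 0)" using L2_scale[OF fL2, of "-1"] by (simp add: G_def)
    moreover have "N2 (G 0) \<le> M" using N2_scale[of "-1" f] fN by (simp add: G_def)
    moreover have "L2 (W 0)" by (simp add: W_def L2_bdd[of "\<lambda>x. 0" 0])
    moreover have "N2 (W 0) \<le> M / lm 0" using M_nonneg lpos[of 0] by (simp add: W_def N2_def)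
    moreover have "\<forall>x\<in>X. G 0 x + f x = Lop (W 0) x" by (simp add: G_def W_def Lop_def)
    ultimately show ?case by blast
  next
    case (Suc t)
    define \<gamma> where "\<gamma> = gm (Suc t)"
    define lmb where "lmb = lm (Suc t)"
    define c where "c = 1 - \<gamma> * lmb"
    have g0: "0 < \<gamma>" and l0: "0 < lmb" using gpos lpos by (auto simp: \<gamma>_def lmb_def)
    have gk: "\<gamma> * k2 \<le> c" using gle[of t] by (simp add: \<gamma>_def lmb_def c_def algebra_simps)
    have c0: "0 \<le> c" using gk g0 k20 by (meson mult_nonneg_nonneg order_trans less_imp_le)
    have LG: "L2 (G t)" and NG: "N2 (G t) \<le> M" and LW: "L2 (W t)" and NW: "N2 (W t) \<le> M / lm t"
      and HW: "\<forall>x\<in>X. G t x + f x = Lop (W t) x" using Suc.IH by auto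
    define H where "H x = c * G t x - \<gamma> * Lop (G t) x" for x
    have LH: "L2 H" unfolding H_def
      using L2_add[OF L2_scale[OF LG, of c] L2_scale[OF L2_Lop[OF LG], of "-\<gamma>"]] by simp
    have NH: "N2 H \<le> c * N2 (G t)" unfolding H_def by (rule op_contract[OF LG _ gk]) (use g0 in simp)
    have Geq: "G (Suc t) x = H x + (- (\<gamma> * lmb)) * f x" if "x \<in> space \<mu>" for x
    proof -
      have x: "x \<in> X" using that spc by simp
      show ?thesis using LK_Lop[OF x, of "G t"]
        by (simp add: G_def H_def \<gamma>_def lmb_def c_def algebra_simps)
    qed
    have L2G: "L2 (G (Suc t))"
      by (rule L2_cong[OF L2_add[OF LH L2_scale[OF fL2, of "- (\<gamma> * lmb)"]]]) (simp add: Geq)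
    have "N2 (G (Suc t)) = N2 (\<lambda>x. H x + (- (\<gamma> * lmb)) * f x)"
      by (rule N2_cong) (simp add: Geq)
    also have "\<dots> \<le> N2 H + N2 (\<lambda>x. (- (\<gamma> * lmb)) * f x)"
      by (rule N2_add[OF LH L2_scale[OF fL2, of "- (\<gamma> * lmb)"]])
    also have "\<dots> \<le> c * M + \<gamma> * lmb * M"
    proof -
      have "N2 H \<le> c * M" using NH NG c0 by (meson mult_left_mono order_trans)
      moreover have "N2 (\<lambda>x. (- (\<gamma> * lmb)) * f x) \<le> \<gamma> * lmb * M"
        using N2_scale[of "- (\<gamma> * lmb)" f] fN g0 l0 by (simp add: abs_mult mult_left_mono)
      ultimately show ?thesis by linarith
    qed
    also have "\<dots> = M" by (simp add: c_def algebra_simps)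
    finally have N2G: "N2 (G (Suc t)) \<le> M" .
    have Weq: "W (Suc t) = (\<lambda>x. c * W t x + (- \<gamma>) * G t x)"
      by (simp add: W_def c_def \<gamma>_def lmb_def)
    have L2W: "L2 (W (Suc t))"
      unfolding Weq by (rule L2_add[OF L2_scale[OF LW, of c] L2_scale[OF LG, of "- \<gamma>"]])
    have "N2 (W (Suc t)) \<le> N2 (\<lambda>x. c * W t x) + N2 (\<lambda>x. (- \<gamma>) * G t x)"
      unfolding Weq by (rule N2_add[OF L2_scale[OF LW, of c] L2_scale[OF LG, of "- \<gamma>"]])
    also have "\<dots> \<le> c * (M / lmb) + \<gamma> * M"
    proof -
      have "M / lm t \<le> M / lmb" using ldec[of t] l0 M_nonneg
        by (simp add: lmb_def divide_left_mono)
      then have "N2 (\<lambda>x. c * W t x) \<le> c * (M / lmb)"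
      proof -
        have "N2 (W t) \<le> M / lmb" using NW \<open>M / lm t \<le> M / lmb\<close> by linarith
        then have "c * N2 (W t) \<le> c * (M / lmb)" using c0 by (rule mult_left_mono)
        then show ?thesis using N2_scale[of c "W t"] c0 by simp
      qed
      moreover have "N2 (\<lambda>x. (- \<gamma>) * G t x) \<le> \<gamma> * M"
        using N2_scale[of "- \<gamma>" "G t"] NG g0 by (simp add: mult_left_mono)
      ultimately show ?thesis by linarith
    qed
    also have "\<dots> = M / lmb" using l0 by (simp add: c_def field_simps)
    finally have N2W: "N2 (W (Suc t)) \<le> M / lm (Suc t)" by (simp add: lmb_def)
    have HW': "\<forall>x\<in>X. G (Suc t) x + f x = Lop (W (Suc t)) x"
    proof
      fix x assume x: "x \<in> X"
      have "Lop (W (Suc t)) x = c * Lop (W t) x + (- \<gamma>) * Lop (G t) x"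
        unfolding Weq by (rule Lop_lin[OF L2_int[OF LW] L2_int[OF LG] x])
      also have "\<dots> = c * (G t x + f x) - \<gamma> * Lop (G t) x" using HW x by simp
      also have "\<dots> = G (Suc t) x + f x"
        using Geq[of x] x spc by (simp add: H_def c_def algebra_simps)
      finally show "G (Suc t) x + f x = Lop (W (Suc t)) x" by simp
    qed
    show ?case using L2G N2G L2W N2W HW' by blast
  qed
  show ?thesis
  proof (intro allI conjI)
    fix t
    have LG: "L2 (G t)" and NG: "N2 (G t) \<le> M" and LW: "L2 (W t)" and NW: "N2 (W t) \<le> M / lm t"
      and HW: "\<forall>x\<in>X. G t x + f x = Lop (W t) x" using inv[of t] by auto
    show "integrable (marginal rho X) (\<lambda>x. (gseq K (marginal rho X) (regr condY) (gam a \<theta> t0) (lam b \<theta> t0) t x)\<^sup>2)"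
      using LG[unfolded L2_def] unfolding G_def \<mu>_def f_def gm_def lm_def by blast
    show "L2norm (marginal rho X) (gseq K (marginal rho X) (regr condY) (gam a \<theta> t0) (lam b \<theta> t0) t) \<le> M"
      using NG[unfolded N2_def] unfolding L2norm_def G_def \<mu>_def f_def gm_def lm_def by blast
    have ir: "in_rkhs K X (\<lambda>x. G t x + f x) = in_rkhs K X (Lop (W t))"
      by (rule in_rkhs_cong) (use HW in simp)
    show "in_rkhs K X (\<lambda>x. gseq K (marginal rho X) (regr condY) (gam a \<theta> t0) (lam b \<theta> t0) t x + regr condY x)"
      using ir in_rkhs_Lop[OF L2_int[OF LW]] by (simp add: G_def \<mu>_def f_def gm_def lm_def)
    have rn: "rkhs_norm K X (\<lambda>x. G t x + f x) = sqrt (P (W t))"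
      using rkhs_norm_cong[of X "\<lambda>x. G t x + f x" "Lop (W t)" K] HW rkhs_norm_Lop[OF L2_int[OF LW]]
      by simp
    have l0: "0 < lm t" by (rule lpos)
    have "P (W t) \<le> N2 (W t) * N2 (Lop (W t))"
      using CS[OF LW L2_Lop[OF LW]] by (simp add: P_def)
    also have "N2 (Lop (W t)) = N2 (\<lambda>x. G t x + f x)"
      by (rule N2_cong) (use HW spc in simp)
    also have "\<dots> \<le> 2 * M" using N2_add[OF LG fL2] NG fN by simp
    finally have "P (W t) \<le> N2 (W t) * (2 * M)"
      using N2_nonneg[of "W t"] by (simp add: mult_left_mono)
    also have "\<dots> \<le> M / lm t * (2 * M)" using NW M_nonneg by (intro mult_right_mono) auto
    also have "\<dots> \<le> (3 * M / sqrt (lm t))\<^sup>2"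
      using l0 M_nonneg by (simp add: power_divide field_simps power2_eq_square)
    finally have "sqrt (P (W t)) \<le> sqrt ((3 * M / sqrt (lm t))\<^sup>2)" by (rule real_sqrt_le_mono)
    also have "\<dots> = 3 * M / sqrt (lm t)" using l0 M_nonneg by simp
    finally show "rkhs_norm K X (\<lambda>x. gseq K (marginal rho X) (regr condY) (gam a \<theta> t0) (lam b \<theta> t0) t x + regr condY x)
              \<le> 3 * M / sqrt (lam b \<theta> t0 t)"
      using rn by (simp add: G_def \<mu>_def f_def gm_def lm_def)
  qed
qed


end
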